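(* Let $A$ be a complex $3$-dimensional binary associative superalgebra of type $(1,2)$. Then either $A$ is associative, or $A$ is isomorphic to one of $\mathrm{R}_{01}^{\mathrm{i}\sqrt3}$, $\mathrm{R}_{01}^{-\mathrm{i}\sqrt3}$, $\mathrm{R}_{07}^{\alpha}$ for some $\alpha\in\mathbb{C}\setminus\{0\}$, or $\mathrm{R}_{28}$.
   Context: All algebras are over $\mathbb{C}$; $\mathrm{i}=\sqrt{-1}$. A superalgebra is a $\mathbb{Z}_2$-graded algebra $A=A_0\oplus A_1$ with $A_iA_j\subseteq A_{i+j \bmod 2}$; $|x|\in\{0,1\}$ is the degree of a homogeneous $x$. It has type $(n,m)$ if $\dim A_0=n$, $\dim A_1=m$. Isomorphisms are grading-preserving algebra isomorphisms. The associator is $(x,y,z)=(xy)z-x(yz)$; a superalgebra is associative if $(x,y,z)=0$ for all $x,y,z$. A binary associative superalgebra is a superalgebra satisfying $(x,y,z)=-(-1)^{|y||z|}(x,z,y)=-(-1)^{|x||y|}(y,x,z)$ for all homogeneous $x,y,z$. Superalgebras of type $(1,2)$, in basis $e_1$ (even), $f_1,f_2$ (odd), listed by nonzero products (unlisted products are zero): $\mathrm{R}_{01}^{\alpha}$ ($\alpha\neq-1$): $e_1f_1=(1+\alpha)f_2,\ f_1e_1=(1-\alpha)f_2,\ f_1f_2=\frac{2(\alpha-1)}{\alpha+1}e_1,\ f_2f_1=-\frac{4}{\alpha+1}e_1$; $\mathrm{R}_{07}^{\alpha}$: $e_1f_1=(1+\alpha)f_2,\ f_1e_1=(1-\alpha)f_2,\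 f_1f_1=e_1$; $\mathrm{R}_{28}$: $e_1f_1=f_2,\ f_1e_1=-f_2,\ f_1f_1=e_1$. *)

theory Defs
  imports "HOL-Analysis.Analysis"
begin

text \<open>A superalgebra of type (1,2) over the complex numbers, given in the graded basis
  e1 (index 0, even), f1 (index 1, odd), f2 (index 2, odd) by its structure constants:
  the product of basis vectors i and j is the sum over k of c i j k times basis vector k.\<close>

type_synonym sc3 = "3 \<Rightarrow> 3 \<Rightarrow> 3 \<Rightarrow> complex"

definition deg :: "3 \<Rightarrow> nat" where
  "deg i = (if i = 0 then 0 else 1)"

definition graded_sc :: "sc3 \<Rightarrow> bool" where
  "graded_sc c \<longleftrightarrow> (\<forall>i j k. c i j k \<noteq> 0 \<longrightarrow> deg k = (deg i + deg j) mod 2)"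

definition smult :: "sc3 \<Rightarrow> complex^3 \<Rightarrow> complex^3 \<Rightarrow> complex^3" where
  "smult c x y = (\<chi> k. \<Sum>i\<in>UNIV. \<Sum>j\<in>UNIV. x$i * y$j * c i j k)"

definition sassoc :: "sc3 \<Rightarrow> complex^3 \<Rightarrow> complex^3 \<Rightarrow> complex^3 \<Rightarrow> complex^3" where
  "sassoc c x y z = smult c (smult c x y) z - smult c x (smult c y z)"

definition homog :: "complex^3 \<Rightarrow> nat \<Rightarrow> bool" where
  "homog x d \<longleftrightarrow> (\<forall>i. deg i \<noteq> d \<longrightarrow> x$i = 0)"

definition sc_associative :: "sc3 \<Rightarrow> bool" where
  "sc_associative c \<longleftrightarrow> (\<forall>x y z. sassoc c x y z = 0)"

definition binary_assoc_super :: "sc3 \<Rightarrow> bool" where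
  "binary_assoc_super c \<longleftrightarrow>
     (\<forall>x y z dx dy dz. dx < 2 \<and> dy < 2 \<and> dz < 2 \<and>
        homog x dx \<and> homog y dy \<and> homog z dz \<longrightarrow>
        sassoc c x y z = (- ((-1) ^ (dy * dz))) *s sassoc c x z y \<and>
        sassoc c x y z = (- ((-1) ^ (dx * dy))) *s sassoc c y x z)"

definition sc_iso :: "sc3 \<Rightarrow> sc3 \<Rightarrow> bool" where
  "sc_iso c c' \<longleftrightarrow> (\<exists>M :: complex^3^3. invertible M \<and>
      (\<forall>x d. homog x d \<longrightarrow> homog (M *v x) d) \<and>
      (\<forall>x y. M *v smult c x y = smult c' (M *v x) (M *v y)))"

definition R01 :: "complex \<Rightarrow> sc3" where
  "R01 \<alpha> i j k =
     (if i = 0 \<and> j = 1 \<and> k = 2 then 1 + \<alpha>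
      else if i = 1 \<and> j = 0 \<and> k = 2 then 1 - \<alpha>
      else if i = 1 \<and> j = 2 \<and> k = 0 then 2 * (\<alpha> - 1) / (\<alpha> + 1)
      else if i = 2 \<and> j = 1 \<and> k = 0 then - 4 / (\<alpha> + 1)
      else 0)"

definition R07 :: "complex \<Rightarrow> sc3" where
  "R07 \<alpha> i j k =
     (if i = 0 \<and> j = 1 \<and> k = 2 then 1 + \<alpha>
      else if i = 1 \<and> j = 0 \<and> k = 2 then 1 - \<alpha>
      else if i = 1 \<and> j = 1 \<and> k = 0 then 1
      else 0)"

definition R28 :: sc3 where
  "R28 i j k =
     (if i = 0 \<and> j = 1 \<and> k = 2 then 1
      else if i = 1 \<and> j = 0 \<and> k = 2 then -1
      else if i = 1 \<and> j = 1 \<and> k = 0 then 1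
      else 0)"

end

theory Submission
  imports Defs
begin

lemma UNIV3: "(UNIV::3 set) = {0,1,2}"
proof -
  have "(3::3) = 0" by simp
  then show ?thesis using UNIV_3 by auto
qed

lemma sum3: "sum f (UNIV::3 set) = f 0 + f 1 + f 2"
  unfolding UNIV3 by (simp add: ac_simps)

lemma forall3: "(\<forall>i::3. P i) \<longleftrightarrow> P 0 \<and> P 1 \<and> P 2"
  by (metis UNIV3 UNIV_I empty_iff insert_iff)

lemma neq3[simp]: "(0::3) \<noteq> 1" "(0::3) \<noteq> 2" "(1::3) \<noteq> 2" "(1::3) \<noteq> 0" "(2::3) \<noteq> 0" "(2::3) \<noteq> 1"
  by simp_all

lemma deg_simps[simp]: "deg 0 = 0" "deg 1 = 1" "deg 2 = 1"
  by (simp_all add: deg_def)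

lemma ne3: "(i::3) \<noteq> 0 \<Longrightarrow> i \<noteq> 1 \<Longrightarrow> i \<noteq> 2 \<Longrightarrow> False"
  using forall3[of "\<lambda>j. j \<noteq> i"] by auto

lemma gz0: "graded_sc c \<Longrightarrow> deg k \<noteq> (deg i + deg j) mod 2 \<Longrightarrow> c i j k = 0"
  unfolding graded_sc_def by blast

lemma smult_comp: "smult c x y $ k = (\<Sum>i\<in>UNIV. \<Sum>j\<in>UNIV. x$i * y$j * c i j k)"
  by (simp add: smult_def)

lemma smult_axis: "smult c (axis i 1) (axis j 1) = (\<chi> k. c i j k)"
  using ne3 by (auto simp add: smult_def axis_def vec_eq_iff sum3)

lemma smult_axis_left: "smult c (axis i 1) y = (\<chi> k. \<Sum>j\<in>UNIV. y$j * c i j k)"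
  using ne3 by (auto simp add: smult_def axis_def vec_eq_iff sum3)

lemma smult_axis_right: "smult c x (axis j 1) = (\<chi> k. \<Sum>i\<in>UNIV. x$i * c i j k)"
  using ne3 by (auto simp add: smult_def axis_def vec_eq_iff sum3)

lemma sassoc_axis: "sassoc c (axis i 1) (axis j 1) (axis k 1) $ m =
   (\<Sum>p\<in>UNIV. c i j p * c p k m) - (\<Sum>p\<in>UNIV. c j k p * c i p m)"
  unfolding sassoc_def smult_axis by (simp add: smult_axis_left smult_axis_right mult.commute)

lemma homog_axis: "homog (axis i 1) (deg i)"
  by (simp add: homog_def axis_def)

lemma deg_lt: "deg i < 2" by (simp add: deg_def)

lemma rel1: assumes "binary_assoc_super c"
  shows "sassoc c (axis i 1) (axis j 1) (axis k 1) $ m = - ((-1) ^ (deg j * deg k)) * sassoc c (axis i 1) (axis k 1) (axis j 1) $ m"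
  using assms unfolding binary_assoc_super_def
  by (metis deg_lt homog_axis vector_smult_component)

lemma rel2: assumes "binary_assoc_super c"
  shows "sassoc c (axis i 1) (axis j 1) (axis k 1) $ m = - ((-1) ^ (deg i * deg j)) * sassoc c (axis j 1) (axis i 1) (axis k 1) $ m"
  using assms unfolding binary_assoc_super_def
  by (metis deg_lt homog_axis vector_smult_component)

lemma gz: assumes "graded_sc c" shows "c 0 0 1 = 0" "c 0 0 2 = 0" "c 0 1 0 = 0" "c 0 2 0 = 0" "c 1 0 0 = 0" "c 1 1 1 = 0" "c 1 1 2 = 0" "c 1 2 1 = 0" "c 1 2 2 = 0" "c 2 0 0 = 0" "c 2 1 1 = 0" "c 2 1 2 = 0" "c 2 2 1 = 0" "c 2 2 2 = 0"
  by (auto intro!: gz0[OF assms])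
lemma E_0000_1: assumes g: "graded_sc c" and b: "binary_assoc_super c" shows "((c 0 0 0 * c 0 0 0) - (c 0 0 0 * c 0 0 0)) = - ((c 0 0 0 * c 0 0 0) - (c 0 0 0 * c 0 0 0))"
  using rel1[OF b, of 0 0 0 0] gz[OF g] by (simp add: sassoc_axis sum3)
lemma E_0000_2: assumes g: "graded_sc c" and b: "binary_assoc_super c" shows "((c 0 0 0 * c 0 0 0) - (c 0 0 0 * c 0 0 0)) = - ((c 0 0 0 * c 0 0 0) - (c 0 0 0 * c 0 0 0))"
  using rel2[OF b, of 0 0 0 0] gz[OF g] by (simp add: sassoc_axis sum3)
lemma E_0011_1: assumes g: "graded_sc c" and b: "binary_assoc_super c" shows "((c 0 0 0 * c 0 1 1) - (c 0 1 1 * c 0 1 1 + c 0 1 2 * c 0 2 1)) = - ((c 0 1 1 * c 1 0 1 + c 0 1 2 * c 2 0 1) - (c 1 0 1 * c 0 1 1 + c 1 0 2 * c 0 2 1))"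
  using rel1[OF b, of 0 0 1 1] gz[OF g] by (simp add: sassoc_axis sum3)
lemma E_0011_2: assumes g: "graded_sc c" and b: "binary_assoc_super c" shows "((c 0 0 0 * c 0 1 1) - (c 0 1 1 * c 0 1 1 + c 0 1 2 * c 0 2 1)) = - ((c 0 0 0 * c 0 1 1) - (c 0 1 1 * c 0 1 1 + c 0 1 2 * c 0 2 1))"
  using rel2[OF b, of 0 0 1 1] gz[OF g] by (simp add: sassoc_axis sum3)
lemma E_0012_1: assumes g: "graded_sc c" and b: "binary_assoc_super c" shows "((c 0 0 0 * c 0 1 2) - (c 0 1 1 * c 0 1 2 + c 0 1 2 * c 0 2 2)) = - ((c 0 1 1 * c 1 0 2 + c 0 1 2 * c 2 0 2) - (c 1 0 1 * c 0 1 2 + c 1 0 2 * c 0 2 2))"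
  using rel1[OF b, of 0 0 1 2] gz[OF g] by (simp add: sassoc_axis sum3)
lemma E_0012_2: assumes g: "graded_sc c" and b: "binary_assoc_super c" shows "((c 0 0 0 * c 0 1 2) - (c 0 1 1 * c 0 1 2 + c 0 1 2 * c 0 2 2)) = - ((c 0 0 0 * c 0 1 2) - (c 0 1 1 * c 0 1 2 + c 0 1 2 * c 0 2 2))"
  using rel2[OF b, of 0 0 1 2] gz[OF g] by (simp add: sassoc_axis sum3)
lemma E_0021_1: assumes g: "graded_sc c" and b: "binary_assoc_super c" shows "((c 0 0 0 * c 0 2 1) - (c 0 2 1 * c 0 1 1 + c 0 2 2 * c 0 2 1)) = - ((c 0 2 1 * c 1 0 1 + c 0 2 2 * c 2 0 1) - (c 2 0 1 * c 0 1 1 + c 2 0 2 * c 0 2 1))"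
  using rel1[OF b, of 0 0 2 1] gz[OF g] by (simp add: sassoc_axis sum3)
lemma E_0021_2: assumes g: "graded_sc c" and b: "binary_assoc_super c" shows "((c 0 0 0 * c 0 2 1) - (c 0 2 1 * c 0 1 1 + c 0 2 2 * c 0 2 1)) = - ((c 0 0 0 * c 0 2 1) - (c 0 2 1 * c 0 1 1 + c 0 2 2 * c 0 2 1))"
  using rel2[OF b, of 0 0 2 1] gz[OF g] by (simp add: sassoc_axis sum3)
lemma E_0022_1: assumes g: "graded_sc c" and b: "binary_assoc_super c" shows "((c 0 0 0 * c 0 2 2) - (c 0 2 1 * c 0 1 2 + c 0 2 2 * c 0 2 2)) = - ((c 0 2 1 * c 1 0 2 + c 0 2 2 * c 2 0 2) - (c 2 0 1 * c 0 1 2 + c 2 0 2 * c 0 2 2))"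
  using rel1[OF b, of 0 0 2 2] gz[OF g] by (simp add: sassoc_axis sum3)
lemma E_0022_2: assumes g: "graded_sc c" and b: "binary_assoc_super c" shows "((c 0 0 0 * c 0 2 2) - (c 0 2 1 * c 0 1 2 + c 0 2 2 * c 0 2 2)) = - ((c 0 0 0 * c 0 2 2) - (c 0 2 1 * c 0 1 2 + c 0 2 2 * c 0 2 2))"
  using rel2[OF b, of 0 0 2 2] gz[OF g] by (simp add: sassoc_axis sum3)
lemma E_0101_1: assumes g: "graded_sc c" and b: "binary_assoc_super c" shows "((c 0 1 1 * c 1 0 1 + c 0 1 2 * c 2 0 1) - (c 1 0 1 * c 0 1 1 + c 1 0 2 * c 0 2 1)) = - ((c 0 0 0 * c 0 1 1) - (c 0 1 1 * c 0 1 1 + c 0 1 2 * c 0 2 1))"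
  using rel1[OF b, of 0 1 0 1] gz[OF g] by (simp add: sassoc_axis sum3)
lemma E_0101_2: assumes g: "graded_sc c" and b: "binary_assoc_super c" shows "((c 0 1 1 * c 1 0 1 + c 0 1 2 * c 2 0 1) - (c 1 0 1 * c 0 1 1 + c 1 0 2 * c 0 2 1)) = - ((c 1 0 1 * c 1 0 1 + c 1 0 2 * c 2 0 1) - (c 0 0 0 * c 1 0 1))"
  using rel2[OF b, of 0 1 0 1] gz[OF g] by (simp add: sassoc_axis sum3)
lemma E_0102_1: assumes g: "graded_sc c" and b: "binary_assoc_super c" shows "((c 0 1 1 * c 1 0 2 + c 0 1 2 * c 2 0 2) - (c 1 0 1 * c 0 1 2 + c 1 0 2 * c 0 2 2)) = - ((c 0 0 0 * c 0 1 2) - (c 0 1 1 * c 0 1 2 + c 0 1 2 * c 0 2 2))"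
  using rel1[OF b, of 0 1 0 2] gz[OF g] by (simp add: sassoc_axis sum3)
lemma E_0102_2: assumes g: "graded_sc c" and b: "binary_assoc_super c" shows "((c 0 1 1 * c 1 0 2 + c 0 1 2 * c 2 0 2) - (c 1 0 1 * c 0 1 2 + c 1 0 2 * c 0 2 2)) = - ((c 1 0 1 * c 1 0 2 + c 1 0 2 * c 2 0 2) - (c 0 0 0 * c 1 0 2))"
  using rel2[OF b, of 0 1 0 2] gz[OF g] by (simp add: sassoc_axis sum3)
lemma E_0110_1: assumes g: "graded_sc c" and b: "binary_assoc_super c" shows "((c 0 1 1 * c 1 1 0 + c 0 1 2 * c 2 1 0) - (c 1 1 0 * c 0 0 0)) = ((c 0 1 1 * c 1 1 0 + c 0 1 2 * c 2 1 0) - (c 1 1 0 * c 0 0 0))"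
  using rel1[OF b, of 0 1 1 0] gz[OF g] by (simp add: sassoc_axis sum3)
lemma E_0110_2: assumes g: "graded_sc c" and b: "binary_assoc_super c" shows "((c 0 1 1 * c 1 1 0 + c 0 1 2 * c 2 1 0) - (c 1 1 0 * c 0 0 0)) = - ((c 1 0 1 * c 1 1 0 + c 1 0 2 * c 2 1 0) - (c 0 1 1 * c 1 1 0 + c 0 1 2 * c 1 2 0))"
  using rel2[OF b, of 0 1 1 0] gz[OF g] by (simp add: sassoc_axis sum3)
lemma E_0120_1: assumes g: "graded_sc c" and b: "binary_assoc_super c" shows "((c 0 1 1 * c 1 2 0 + c 0 1 2 * c 2 2 0) - (c 1 2 0 * c 0 0 0)) = ((c 0 2 1 * c 1 1 0 + c 0 2 2 * c 2 1 0) - (c 2 1 0 * c 0 0 0))"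
  using rel1[OF b, of 0 1 2 0] gz[OF g] by (simp add: sassoc_axis sum3)
lemma E_0120_2: assumes g: "graded_sc c" and b: "binary_assoc_super c" shows "((c 0 1 1 * c 1 2 0 + c 0 1 2 * c 2 2 0) - (c 1 2 0 * c 0 0 0)) = - ((c 1 0 1 * c 1 2 0 + c 1 0 2 * c 2 2 0) - (c 0 2 1 * c 1 1 0 + c 0 2 2 * c 1 2 0))"
  using rel2[OF b, of 0 1 2 0] gz[OF g] by (simp add: sassoc_axis sum3)
lemma E_0201_1: assumes g: "graded_sc c" and b: "binary_assoc_super c" shows "((c 0 2 1 * c 1 0 1 + c 0 2 2 * c 2 0 1) - (c 2 0 1 * c 0 1 1 + c 2 0 2 * c 0 2 1)) = - ((c 0 0 0 * c 0 2 1) - (c 0 2 1 * c 0 1 1 + c 0 2 2 * c 0 2 1))"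
  using rel1[OF b, of 0 2 0 1] gz[OF g] by (simp add: sassoc_axis sum3)
lemma E_0201_2: assumes g: "graded_sc c" and b: "binary_assoc_super c" shows "((c 0 2 1 * c 1 0 1 + c 0 2 2 * c 2 0 1) - (c 2 0 1 * c 0 1 1 + c 2 0 2 * c 0 2 1)) = - ((c 2 0 1 * c 1 0 1 + c 2 0 2 * c 2 0 1) - (c 0 0 0 * c 2 0 1))"
  using rel2[OF b, of 0 2 0 1] gz[OF g] by (simp add: sassoc_axis sum3)
lemma E_0202_1: assumes g: "graded_sc c" and b: "binary_assoc_super c" shows "((c 0 2 1 * c 1 0 2 + c 0 2 2 * c 2 0 2) - (c 2 0 1 * c 0 1 2 + c 2 0 2 * c 0 2 2)) = - ((c 0 0 0 * c 0 2 2) - (c 0 2 1 * c 0 1 2 + c 0 2 2 * c 0 2 2))"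
  using rel1[OF b, of 0 2 0 2] gz[OF g] by (simp add: sassoc_axis sum3)
lemma E_0202_2: assumes g: "graded_sc c" and b: "binary_assoc_super c" shows "((c 0 2 1 * c 1 0 2 + c 0 2 2 * c 2 0 2) - (c 2 0 1 * c 0 1 2 + c 2 0 2 * c 0 2 2)) = - ((c 2 0 1 * c 1 0 2 + c 2 0 2 * c 2 0 2) - (c 0 0 0 * c 2 0 2))"
  using rel2[OF b, of 0 2 0 2] gz[OF g] by (simp add: sassoc_axis sum3)
lemma E_0210_1: assumes g: "graded_sc c" and b: "binary_assoc_super c" shows "((c 0 2 1 * c 1 1 0 + c 0 2 2 * c 2 1 0) - (c 2 1 0 * c 0 0 0)) = ((c 0 1 1 * c 1 2 0 + c 0 1 2 * c 2 2 0) - (c 1 2 0 * c 0 0 0))"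
  using rel1[OF b, of 0 2 1 0] gz[OF g] by (simp add: sassoc_axis sum3)
lemma E_0210_2: assumes g: "graded_sc c" and b: "binary_assoc_super c" shows "((c 0 2 1 * c 1 1 0 + c 0 2 2 * c 2 1 0) - (c 2 1 0 * c 0 0 0)) = - ((c 2 0 1 * c 1 1 0 + c 2 0 2 * c 2 1 0) - (c 0 1 1 * c 2 1 0 + c 0 1 2 * c 2 2 0))"
  using rel2[OF b, of 0 2 1 0] gz[OF g] by (simp add: sassoc_axis sum3)
lemma E_0220_1: assumes g: "graded_sc c" and b: "binary_assoc_super c" shows "((c 0 2 1 * c 1 2 0 + c 0 2 2 * c 2 2 0) - (c 2 2 0 * c 0 0 0)) = ((c 0 2 1 * c 1 2 0 + c 0 2 2 * c 2 2 0) - (c 2 2 0 * c 0 0 0))"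
  using rel1[OF b, of 0 2 2 0] gz[OF g] by (simp add: sassoc_axis sum3)
lemma E_0220_2: assumes g: "graded_sc c" and b: "binary_assoc_super c" shows "((c 0 2 1 * c 1 2 0 + c 0 2 2 * c 2 2 0) - (c 2 2 0 * c 0 0 0)) = - ((c 2 0 1 * c 1 2 0 + c 2 0 2 * c 2 2 0) - (c 0 2 1 * c 2 1 0 + c 0 2 2 * c 2 2 0))"
  using rel2[OF b, of 0 2 2 0] gz[OF g] by (simp add: sassoc_axis sum3)
lemma E_1001_1: assumes g: "graded_sc c" and b: "binary_assoc_super c" shows "((c 1 0 1 * c 1 0 1 + c 1 0 2 * c 2 0 1) - (c 0 0 0 * c 1 0 1)) = - ((c 1 0 1 * c 1 0 1 + c 1 0 2 * c 2 0 1) - (c 0 0 0 * c 1 0 1))"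
  using rel1[OF b, of 1 0 0 1] gz[OF g] by (simp add: sassoc_axis sum3)
lemma E_1001_2: assumes g: "graded_sc c" and b: "binary_assoc_super c" shows "((c 1 0 1 * c 1 0 1 + c 1 0 2 * c 2 0 1) - (c 0 0 0 * c 1 0 1)) = - ((c 0 1 1 * c 1 0 1 + c 0 1 2 * c 2 0 1) - (c 1 0 1 * c 0 1 1 + c 1 0 2 * c 0 2 1))"
  using rel2[OF b, of 1 0 0 1] gz[OF g] by (simp add: sassoc_axis sum3)
lemma E_1002_1: assumes g: "graded_sc c" and b: "binary_assoc_super c" shows "((c 1 0 1 * c 1 0 2 + c 1 0 2 * c 2 0 2) - (c 0 0 0 * c 1 0 2)) = - ((c 1 0 1 * c 1 0 2 + c 1 0 2 * c 2 0 2) - (c 0 0 0 * c 1 0 2))"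
  using rel1[OF b, of 1 0 0 2] gz[OF g] by (simp add: sassoc_axis sum3)
lemma E_1002_2: assumes g: "graded_sc c" and b: "binary_assoc_super c" shows "((c 1 0 1 * c 1 0 2 + c 1 0 2 * c 2 0 2) - (c 0 0 0 * c 1 0 2)) = - ((c 0 1 1 * c 1 0 2 + c 0 1 2 * c 2 0 2) - (c 1 0 1 * c 0 1 2 + c 1 0 2 * c 0 2 2))"
  using rel2[OF b, of 1 0 0 2] gz[OF g] by (simp add: sassoc_axis sum3)
lemma E_1010_1: assumes g: "graded_sc c" and b: "binary_assoc_super c" shows "((c 1 0 1 * c 1 1 0 + c 1 0 2 * c 2 1 0) - (c 0 1 1 * c 1 1 0 + c 0 1 2 * c 1 2 0)) = - ((c 1 1 0 * c 0 0 0) - (c 1 0 1 * c 1 1 0 + c 1 0 2 * c 1 2 0))"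
  using rel1[OF b, of 1 0 1 0] gz[OF g] by (simp add: sassoc_axis sum3)
lemma E_1010_2: assumes g: "graded_sc c" and b: "binary_assoc_super c" shows "((c 1 0 1 * c 1 1 0 + c 1 0 2 * c 2 1 0) - (c 0 1 1 * c 1 1 0 + c 0 1 2 * c 1 2 0)) = - ((c 0 1 1 * c 1 1 0 + c 0 1 2 * c 2 1 0) - (c 1 1 0 * c 0 0 0))"
  using rel2[OF b, of 1 0 1 0] gz[OF g] by (simp add: sassoc_axis sum3)
lemma E_1020_1: assumes g: "graded_sc c" and b: "binary_assoc_super c" shows "((c 1 0 1 * c 1 2 0 + c 1 0 2 * c 2 2 0) - (c 0 2 1 * c 1 1 0 + c 0 2 2 * c 1 2 0)) = - ((c 1 2 0 * c 0 0 0) - (c 2 0 1 * c 1 1 0 + c 2 0 2 * c 1 2 0))"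
  using rel1[OF b, of 1 0 2 0] gz[OF g] by (simp add: sassoc_axis sum3)
lemma E_1020_2: assumes g: "graded_sc c" and b: "binary_assoc_super c" shows "((c 1 0 1 * c 1 2 0 + c 1 0 2 * c 2 2 0) - (c 0 2 1 * c 1 1 0 + c 0 2 2 * c 1 2 0)) = - ((c 0 1 1 * c 1 2 0 + c 0 1 2 * c 2 2 0) - (c 1 2 0 * c 0 0 0))"
  using rel2[OF b, of 1 0 2 0] gz[OF g] by (simp add: sassoc_axis sum3)
lemma E_1100_1: assumes g: "graded_sc c" and b: "binary_assoc_super c" shows "((c 1 1 0 * c 0 0 0) - (c 1 0 1 * c 1 1 0 + c 1 0 2 * c 1 2 0)) = - ((c 1 0 1 * c 1 1 0 + c 1 0 2 * c 2 1 0) - (c 0 1 1 * c 1 1 0 + c 0 1 2 * c 1 2 0))"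
  using rel1[OF b, of 1 1 0 0] gz[OF g] by (simp add: sassoc_axis sum3)
lemma E_1100_2: assumes g: "graded_sc c" and b: "binary_assoc_super c" shows "((c 1 1 0 * c 0 0 0) - (c 1 0 1 * c 1 1 0 + c 1 0 2 * c 1 2 0)) = ((c 1 1 0 * c 0 0 0) - (c 1 0 1 * c 1 1 0 + c 1 0 2 * c 1 2 0))"
  using rel2[OF b, of 1 1 0 0] gz[OF g] by (simp add: sassoc_axis sum3)
lemma E_1111_1: assumes g: "graded_sc c" and b: "binary_assoc_super c" shows "((c 1 1 0 * c 0 1 1) - (c 1 1 0 * c 1 0 1)) = ((c 1 1 0 * c 0 1 1) - (c 1 1 0 * c 1 0 1))"
  using rel1[OF b, of 1 1 1 1] gz[OF g] by (simp add: sassoc_axis sum3)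
lemma E_1111_2: assumes g: "graded_sc c" and b: "binary_assoc_super c" shows "((c 1 1 0 * c 0 1 1) - (c 1 1 0 * c 1 0 1)) = ((c 1 1 0 * c 0 1 1) - (c 1 1 0 * c 1 0 1))"
  using rel2[OF b, of 1 1 1 1] gz[OF g] by (simp add: sassoc_axis sum3)
lemma E_1112_1: assumes g: "graded_sc c" and b: "binary_assoc_super c" shows "((c 1 1 0 * c 0 1 2) - (c 1 1 0 * c 1 0 2)) = ((c 1 1 0 * c 0 1 2) - (c 1 1 0 * c 1 0 2))"
  using rel1[OF b, of 1 1 1 2] gz[OF g] by (simp add: sassoc_axis sum3)
lemma E_1112_2: assumes g: "graded_sc c" and b: "binary_assoc_super c" shows "((c 1 1 0 * c 0 1 2) - (c 1 1 0 * c 1 0 2)) = ((c 1 1 0 * c 0 1 2) - (c 1 1 0 * c 1 0 2))"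
  using rel2[OF b, of 1 1 1 2] gz[OF g] by (simp add: sassoc_axis sum3)
lemma E_1121_1: assumes g: "graded_sc c" and b: "binary_assoc_super c" shows "((c 1 1 0 * c 0 2 1) - (c 1 2 0 * c 1 0 1)) = ((c 1 2 0 * c 0 1 1) - (c 2 1 0 * c 1 0 1))"
  using rel1[OF b, of 1 1 2 1] gz[OF g] by (simp add: sassoc_axis sum3)
lemma E_1121_2: assumes g: "graded_sc c" and b: "binary_assoc_super c" shows "((c 1 1 0 * c 0 2 1) - (c 1 2 0 * c 1 0 1)) = ((c 1 1 0 * c 0 2 1) - (c 1 2 0 * c 1 0 1))"
  using rel2[OF b, of 1 1 2 1] gz[OF g] by (simp add: sassoc_axis sum3)
lemma E_1122_1: assumes g: "graded_sc c" and b: "binary_assoc_super c" shows "((c 1 1 0 * c 0 2 2) - (c 1 2 0 * c 1 0 2)) = ((c 1 2 0 * c 0 1 2) - (c 2 1 0 * c 1 0 2))"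
  using rel1[OF b, of 1 1 2 2] gz[OF g] by (simp add: sassoc_axis sum3)
lemma E_1122_2: assumes g: "graded_sc c" and b: "binary_assoc_super c" shows "((c 1 1 0 * c 0 2 2) - (c 1 2 0 * c 1 0 2)) = ((c 1 1 0 * c 0 2 2) - (c 1 2 0 * c 1 0 2))"
  using rel2[OF b, of 1 1 2 2] gz[OF g] by (simp add: sassoc_axis sum3)
lemma E_1200_1: assumes g: "graded_sc c" and b: "binary_assoc_super c" shows "((c 1 2 0 * c 0 0 0) - (c 2 0 1 * c 1 1 0 + c 2 0 2 * c 1 2 0)) = - ((c 1 0 1 * c 1 2 0 + c 1 0 2 * c 2 2 0) - (c 0 2 1 * c 1 1 0 + c 0 2 2 * c 1 2 0))"
  using rel1[OF b, of 1 2 0 0] gz[OF g] by (simp add: sassoc_axis sum3)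
lemma E_1200_2: assumes g: "graded_sc c" and b: "binary_assoc_super c" shows "((c 1 2 0 * c 0 0 0) - (c 2 0 1 * c 1 1 0 + c 2 0 2 * c 1 2 0)) = ((c 2 1 0 * c 0 0 0) - (c 1 0 1 * c 2 1 0 + c 1 0 2 * c 2 2 0))"
  using rel2[OF b, of 1 2 0 0] gz[OF g] by (simp add: sassoc_axis sum3)
lemma E_1211_1: assumes g: "graded_sc c" and b: "binary_assoc_super c" shows "((c 1 2 0 * c 0 1 1) - (c 2 1 0 * c 1 0 1)) = ((c 1 1 0 * c 0 2 1) - (c 1 2 0 * c 1 0 1))"
  using rel1[OF b, of 1 2 1 1] gz[OF g] by (simp add: sassoc_axis sum3)
lemma E_1211_2: assumes g: "graded_sc c" and b: "binary_assoc_super c" shows "((c 1 2 0 * c 0 1 1) - (c 2 1 0 * c 1 0 1)) = ((c 2 1 0 * c 0 1 1) - (c 1 1 0 * c 2 0 1))"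
  using rel2[OF b, of 1 2 1 1] gz[OF g] by (simp add: sassoc_axis sum3)
lemma E_1212_1: assumes g: "graded_sc c" and b: "binary_assoc_super c" shows "((c 1 2 0 * c 0 1 2) - (c 2 1 0 * c 1 0 2)) = ((c 1 1 0 * c 0 2 2) - (c 1 2 0 * c 1 0 2))"
  using rel1[OF b, of 1 2 1 2] gz[OF g] by (simp add: sassoc_axis sum3)
lemma E_1212_2: assumes g: "graded_sc c" and b: "binary_assoc_super c" shows "((c 1 2 0 * c 0 1 2) - (c 2 1 0 * c 1 0 2)) = ((c 2 1 0 * c 0 1 2) - (c 1 1 0 * c 2 0 2))"
  using rel2[OF b, of 1 2 1 2] gz[OF g] by (simp add: sassoc_axis sum3)
lemma E_1221_1: assumes g: "graded_sc c" and b: "binary_assoc_super c" shows "((c 1 2 0 * c 0 2 1) - (c 2 2 0 * c 1 0 1)) = ((c 1 2 0 * c 0 2 1) - (c 2 2 0 * c 1 0 1))"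
  using rel1[OF b, of 1 2 2 1] gz[OF g] by (simp add: sassoc_axis sum3)
lemma E_1221_2: assumes g: "graded_sc c" and b: "binary_assoc_super c" shows "((c 1 2 0 * c 0 2 1) - (c 2 2 0 * c 1 0 1)) = ((c 2 1 0 * c 0 2 1) - (c 1 2 0 * c 2 0 1))"
  using rel2[OF b, of 1 2 2 1] gz[OF g] by (simp add: sassoc_axis sum3)
lemma E_1222_1: assumes g: "graded_sc c" and b: "binary_assoc_super c" shows "((c 1 2 0 * c 0 2 2) - (c 2 2 0 * c 1 0 2)) = ((c 1 2 0 * c 0 2 2) - (c 2 2 0 * c 1 0 2))"
  using rel1[OF b, of 1 2 2 2] gz[OF g] by (simp add: sassoc_axis sum3)
lemma E_1222_2: assumes g: "graded_sc c" and b: "binary_assoc_super c" shows "((c 1 2 0 * c 0 2 2) - (c 2 2 0 * c 1 0 2)) = ((c 2 1 0 * c 0 2 2) - (c 1 2 0 * c 2 0 2))"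
  using rel2[OF b, of 1 2 2 2] gz[OF g] by (simp add: sassoc_axis sum3)
lemma E_2001_1: assumes g: "graded_sc c" and b: "binary_assoc_super c" shows "((c 2 0 1 * c 1 0 1 + c 2 0 2 * c 2 0 1) - (c 0 0 0 * c 2 0 1)) = - ((c 2 0 1 * c 1 0 1 + c 2 0 2 * c 2 0 1) - (c 0 0 0 * c 2 0 1))"
  using rel1[OF b, of 2 0 0 1] gz[OF g] by (simp add: sassoc_axis sum3)
lemma E_2001_2: assumes g: "graded_sc c" and b: "binary_assoc_super c" shows "((c 2 0 1 * c 1 0 1 + c 2 0 2 * c 2 0 1) - (c 0 0 0 * c 2 0 1)) = - ((c 0 2 1 * c 1 0 1 + c 0 2 2 * c 2 0 1) - (c 2 0 1 * c 0 1 1 + c 2 0 2 * c 0 2 1))"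
  using rel2[OF b, of 2 0 0 1] gz[OF g] by (simp add: sassoc_axis sum3)
lemma E_2002_1: assumes g: "graded_sc c" and b: "binary_assoc_super c" shows "((c 2 0 1 * c 1 0 2 + c 2 0 2 * c 2 0 2) - (c 0 0 0 * c 2 0 2)) = - ((c 2 0 1 * c 1 0 2 + c 2 0 2 * c 2 0 2) - (c 0 0 0 * c 2 0 2))"
  using rel1[OF b, of 2 0 0 2] gz[OF g] by (simp add: sassoc_axis sum3)
lemma E_2002_2: assumes g: "graded_sc c" and b: "binary_assoc_super c" shows "((c 2 0 1 * c 1 0 2 + c 2 0 2 * c 2 0 2) - (c 0 0 0 * c 2 0 2)) = - ((c 0 2 1 * c 1 0 2 + c 0 2 2 * c 2 0 2) - (c 2 0 1 * c 0 1 2 + c 2 0 2 * c 0 2 2))"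
  using rel2[OF b, of 2 0 0 2] gz[OF g] by (simp add: sassoc_axis sum3)
lemma E_2010_1: assumes g: "graded_sc c" and b: "binary_assoc_super c" shows "((c 2 0 1 * c 1 1 0 + c 2 0 2 * c 2 1 0) - (c 0 1 1 * c 2 1 0 + c 0 1 2 * c 2 2 0)) = - ((c 2 1 0 * c 0 0 0) - (c 1 0 1 * c 2 1 0 + c 1 0 2 * c 2 2 0))"
  using rel1[OF b, of 2 0 1 0] gz[OF g] by (simp add: sassoc_axis sum3)
lemma E_2010_2: assumes g: "graded_sc c" and b: "binary_assoc_super c" shows "((c 2 0 1 * c 1 1 0 + c 2 0 2 * c 2 1 0) - (c 0 1 1 * c 2 1 0 + c 0 1 2 * c 2 2 0)) = - ((c 0 2 1 * c 1 1 0 + c 0 2 2 * c 2 1 0) - (c 2 1 0 * c 0 0 0))"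
  using rel2[OF b, of 2 0 1 0] gz[OF g] by (simp add: sassoc_axis sum3)
lemma E_2020_1: assumes g: "graded_sc c" and b: "binary_assoc_super c" shows "((c 2 0 1 * c 1 2 0 + c 2 0 2 * c 2 2 0) - (c 0 2 1 * c 2 1 0 + c 0 2 2 * c 2 2 0)) = - ((c 2 2 0 * c 0 0 0) - (c 2 0 1 * c 2 1 0 + c 2 0 2 * c 2 2 0))"
  using rel1[OF b, of 2 0 2 0] gz[OF g] by (simp add: sassoc_axis sum3)
lemma E_2020_2: assumes g: "graded_sc c" and b: "binary_assoc_super c" shows "((c 2 0 1 * c 1 2 0 + c 2 0 2 * c 2 2 0) - (c 0 2 1 * c 2 1 0 + c 0 2 2 * c 2 2 0)) = - ((c 0 2 1 * c 1 2 0 + c 0 2 2 * c 2 2 0) - (c 2 2 0 * c 0 0 0))"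
  using rel2[OF b, of 2 0 2 0] gz[OF g] by (simp add: sassoc_axis sum3)
lemma E_2100_1: assumes g: "graded_sc c" and b: "binary_assoc_super c" shows "((c 2 1 0 * c 0 0 0) - (c 1 0 1 * c 2 1 0 + c 1 0 2 * c 2 2 0)) = - ((c 2 0 1 * c 1 1 0 + c 2 0 2 * c 2 1 0) - (c 0 1 1 * c 2 1 0 + c 0 1 2 * c 2 2 0))"
  using rel1[OF b, of 2 1 0 0] gz[OF g] by (simp add: sassoc_axis sum3)
lemma E_2100_2: assumes g: "graded_sc c" and b: "binary_assoc_super c" shows "((c 2 1 0 * c 0 0 0) - (c 1 0 1 * c 2 1 0 + c 1 0 2 * c 2 2 0)) = ((c 1 2 0 * c 0 0 0) - (c 2 0 1 * c 1 1 0 + c 2 0 2 * c 1 2 0))"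
  using rel2[OF b, of 2 1 0 0] gz[OF g] by (simp add: sassoc_axis sum3)
lemma E_2111_1: assumes g: "graded_sc c" and b: "binary_assoc_super c" shows "((c 2 1 0 * c 0 1 1) - (c 1 1 0 * c 2 0 1)) = ((c 2 1 0 * c 0 1 1) - (c 1 1 0 * c 2 0 1))"
  using rel1[OF b, of 2 1 1 1] gz[OF g] by (simp add: sassoc_axis sum3)
lemma E_2111_2: assumes g: "graded_sc c" and b: "binary_assoc_super c" shows "((c 2 1 0 * c 0 1 1) - (c 1 1 0 * c 2 0 1)) = ((c 1 2 0 * c 0 1 1) - (c 2 1 0 * c 1 0 1))"
  using rel2[OF b, of 2 1 1 1] gz[OF g] by (simp add: sassoc_axis sum3)
lemma E_2112_1: assumes g: "graded_sc c" and b: "binary_assoc_super c" shows "((c 2 1 0 * c 0 1 2) - (c 1 1 0 * c 2 0 2)) = ((c 2 1 0 * c 0 1 2) - (c 1 1 0 * c 2 0 2))"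
  using rel1[OF b, of 2 1 1 2] gz[OF g] by (simp add: sassoc_axis sum3)
lemma E_2112_2: assumes g: "graded_sc c" and b: "binary_assoc_super c" shows "((c 2 1 0 * c 0 1 2) - (c 1 1 0 * c 2 0 2)) = ((c 1 2 0 * c 0 1 2) - (c 2 1 0 * c 1 0 2))"
  using rel2[OF b, of 2 1 1 2] gz[OF g] by (simp add: sassoc_axis sum3)
lemma E_2121_1: assumes g: "graded_sc c" and b: "binary_assoc_super c" shows "((c 2 1 0 * c 0 2 1) - (c 1 2 0 * c 2 0 1)) = ((c 2 2 0 * c 0 1 1) - (c 2 1 0 * c 2 0 1))"
  using rel1[OF b, of 2 1 2 1] gz[OF g] by (simp add: sassoc_axis sum3)
lemma E_2121_2: assumes g: "graded_sc c" and b: "binary_assoc_super c" shows "((c 2 1 0 * c 0 2 1) - (c 1 2 0 * c 2 0 1)) = ((c 1 2 0 * c 0 2 1) - (c 2 2 0 * c 1 0 1))"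
  using rel2[OF b, of 2 1 2 1] gz[OF g] by (simp add: sassoc_axis sum3)
lemma E_2122_1: assumes g: "graded_sc c" and b: "binary_assoc_super c" shows "((c 2 1 0 * c 0 2 2) - (c 1 2 0 * c 2 0 2)) = ((c 2 2 0 * c 0 1 2) - (c 2 1 0 * c 2 0 2))"
  using rel1[OF b, of 2 1 2 2] gz[OF g] by (simp add: sassoc_axis sum3)
lemma E_2122_2: assumes g: "graded_sc c" and b: "binary_assoc_super c" shows "((c 2 1 0 * c 0 2 2) - (c 1 2 0 * c 2 0 2)) = ((c 1 2 0 * c 0 2 2) - (c 2 2 0 * c 1 0 2))"
  using rel2[OF b, of 2 1 2 2] gz[OF g] by (simp add: sassoc_axis sum3)
lemma E_2200_1: assumes g: "graded_sc c" and b: "binary_assoc_super c" shows "((c 2 2 0 * c 0 0 0) - (c 2 0 1 * c 2 1 0 + c 2 0 2 * c 2 2 0)) = - ((c 2 0 1 * c 1 2 0 + c 2 0 2 * c 2 2 0) - (c 0 2 1 * c 2 1 0 + c 0 2 2 * c 2 2 0))"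
  using rel1[OF b, of 2 2 0 0] gz[OF g] by (simp add: sassoc_axis sum3)
lemma E_2200_2: assumes g: "graded_sc c" and b: "binary_assoc_super c" shows "((c 2 2 0 * c 0 0 0) - (c 2 0 1 * c 2 1 0 + c 2 0 2 * c 2 2 0)) = ((c 2 2 0 * c 0 0 0) - (c 2 0 1 * c 2 1 0 + c 2 0 2 * c 2 2 0))"
  using rel2[OF b, of 2 2 0 0] gz[OF g] by (simp add: sassoc_axis sum3)
lemma E_2211_1: assumes g: "graded_sc c" and b: "binary_assoc_super c" shows "((c 2 2 0 * c 0 1 1) - (c 2 1 0 * c 2 0 1)) = ((c 2 1 0 * c 0 2 1) - (c 1 2 0 * c 2 0 1))"
  using rel1[OF b, of 2 2 1 1] gz[OF g] by (simp add: sassoc_axis sum3)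
lemma E_2211_2: assumes g: "graded_sc c" and b: "binary_assoc_super c" shows "((c 2 2 0 * c 0 1 1) - (c 2 1 0 * c 2 0 1)) = ((c 2 2 0 * c 0 1 1) - (c 2 1 0 * c 2 0 1))"
  using rel2[OF b, of 2 2 1 1] gz[OF g] by (simp add: sassoc_axis sum3)
lemma E_2212_1: assumes g: "graded_sc c" and b: "binary_assoc_super c" shows "((c 2 2 0 * c 0 1 2) - (c 2 1 0 * c 2 0 2)) = ((c 2 1 0 * c 0 2 2) - (c 1 2 0 * c 2 0 2))"
  using rel1[OF b, of 2 2 1 2] gz[OF g] by (simp add: sassoc_axis sum3)
lemma E_2212_2: assumes g: "graded_sc c" and b: "binary_assoc_super c" shows "((c 2 2 0 * c 0 1 2) - (c 2 1 0 * c 2 0 2)) = ((c 2 2 0 * c 0 1 2) - (c 2 1 0 * c 2 0 2))"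
  using rel2[OF b, of 2 2 1 2] gz[OF g] by (simp add: sassoc_axis sum3)
lemma E_2221_1: assumes g: "graded_sc c" and b: "binary_assoc_super c" shows "((c 2 2 0 * c 0 2 1) - (c 2 2 0 * c 2 0 1)) = ((c 2 2 0 * c 0 2 1) - (c 2 2 0 * c 2 0 1))"
  using rel1[OF b, of 2 2 2 1] gz[OF g] by (simp add: sassoc_axis sum3)
lemma E_2221_2: assumes g: "graded_sc c" and b: "binary_assoc_super c" shows "((c 2 2 0 * c 0 2 1) - (c 2 2 0 * c 2 0 1)) = ((c 2 2 0 * c 0 2 1) - (c 2 2 0 * c 2 0 1))"
  using rel2[OF b, of 2 2 2 1] gz[OF g] by (simp add: sassoc_axis sum3)
lemma E_2222_1: assumes g: "graded_sc c" and b: "binary_assoc_super c" shows "((c 2 2 0 * c 0 2 2) - (c 2 2 0 * c 2 0 2)) = ((c 2 2 0 * c 0 2 2) - (c 2 2 0 * c 2 0 2))"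
  using rel1[OF b, of 2 2 2 2] gz[OF g] by (simp add: sassoc_axis sum3)
lemma E_2222_2: assumes g: "graded_sc c" and b: "binary_assoc_super c" shows "((c 2 2 0 * c 0 2 2) - (c 2 2 0 * c 2 0 2)) = ((c 2 2 0 * c 0 2 2) - (c 2 2 0 * c 2 0 2))"
  using rel2[OF b, of 2 2 2 2] gz[OF g] by (simp add: sassoc_axis sum3)
lemmas Eall = E_0000_1 E_0000_2 E_0011_1 E_0011_2 E_0012_1 E_0012_2 E_0021_1 E_0021_2 E_0022_1 E_0022_2 E_0101_1 E_0101_2 E_0102_1 E_0102_2 E_0110_1 E_0110_2 E_0120_1 E_0120_2 E_0201_1 E_0201_2 E_0202_1 E_0202_2 E_0210_1 E_0210_2 E_0220_1 E_0220_2 E_1001_1 E_1001_2 E_1002_1 E_1002_2 E_1010_1 E_1010_2 E_1020_1 E_1020_2 E_1100_1 E_1100_2 E_1111_1 E_1111_2 E_1112_1 E_1112_2 E_1121_1 E_1121_2 E_1122_1 E_1122_2 E_1200_1 E_1200_2 E_1211_1 E_1211_2 E_1212_1 E_1212_2 E_1221_1 E_1221_2 E_1222_1 E_1222_2 E_2001_1 E_2001_2 E_2002_1 E_2002_2 E_2010_1 E_2010_2 E_2020_1 E_2020_2 E_2100_1 E_2100_2 E_2111_1 E_2111_2 E_2112_1 E_2112_2 E_2121_1 E_2121_2 E_2122_1 E_2122_2 E_2200_1 E_2200_2 E_2211_1 E_2211_2 E_2212_1 E_2212_2 E_2221_1 E_2221_2 E_2222_1 E_2222_2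
lemmas Ered = E_0011_1 E_0011_2 E_0012_1 E_0012_2 E_0021_1 E_0021_2 E_0022_1 E_0022_2 E_0101_2 E_0102_2 E_0110_2 E_0120_1 E_0120_2 E_0201_2 E_0202_2 E_0210_2 E_0220_2 E_1001_1 E_1002_1 E_1010_1 E_1020_1 E_1121_1 E_1122_1 E_1200_2 E_1211_2 E_1212_2 E_1221_2 E_1222_2 E_2001_1 E_2002_1 E_2010_1 E_2020_1 E_2121_1 E_2122_1

lemma sassoc_expand: "sassoc c x y z $ m =
  (\<Sum>i\<in>UNIV. \<Sum>j\<in>UNIV. \<Sum>k\<in>UNIV. x$i * y$j * z$k *
     ((\<Sum>p\<in>UNIV. c i j p * c p k m) - (\<Sum>p\<in>UNIV. c j k p * c i p m)))"
  unfolding sassoc_def smult_def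
  by (simp add: sum3 algebra_simps)

lemma assoc_basis:
  assumes "\<And>i j k m. (\<Sum>p\<in>UNIV. c i j p * c p k m) - (\<Sum>p\<in>UNIV. c j k p * c i p m) = 0"
  shows "sc_associative c"
  unfolding sc_associative_def
  by (simp add: vec_eq_iff sassoc_expand assms)

lemma assoc_if: assumes g: "graded_sc c" and Z: "((c 0 0 0 * c 0 0 0) - (c 0 0 0 * c 0 0 0)) = 0" "((c 0 0 0 * c 0 1 1) - (c 0 1 1 * c 0 1 1 + c 0 1 2 * c 0 2 1)) = 0" "((c 0 0 0 * c 0 1 2) - (c 0 1 1 * c 0 1 2 + c 0 1 2 * c 0 2 2)) = 0" "((c 0 0 0 * c 0 2 1) - (c 0 2 1 * c 0 1 1 + c 0 2 2 * c 0 2 1)) = 0" "((c 0 0 0 * c 0 2 2) - (c 0 2 1 * c 0 1 2 + c 0 2 2 * c 0 2 2)) = 0" "((c 0 1 1 * c 1 0 1 + c 0 1 2 * c 2 0 1) - (c 1 0 1 * c 0 1 1 + c 1 0 2 * c 0 2 1)) = 0" "((c 0 1 1 * c 1 0 2 + c 0 1 2 * c 2 0 2) - (c 1 0 1 * c 0 1 2 + c 1 0 2 * c 0 2 2)) = 0" "((c 0 1 1 * c 1 1 0 + c 0 1 2 * c 2 1 0) - (c 1 1 0 * c 0 0 0)) = 0" "((c 0 1 1 * c 1 2 0 + c 0 1 2 * c 2 2 0) - (c 1 2 0 * c 0 0 0)) = 0" "((c 0 2 1 * c 1 0 1 + c 0 2 2 * c 2 0 1) - (c 2 0 1 * c 0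 1 1 + c 2 0 2 * c 0 2 1)) = 0" "((c 0 2 1 * c 1 0 2 + c 0 2 2 * c 2 0 2) - (c 2 0 1 * c 0 1 2 + c 2 0 2 * c 0 2 2)) = 0" "((c 0 2 1 * c 1 1 0 + c 0 2 2 * c 2 1 0) - (c 2 1 0 * c 0 0 0)) = 0" "((c 0 2 1 * c 1 2 0 + c 0 2 2 * c 2 2 0) - (c 2 2 0 * c 0 0 0)) = 0" "((c 1 0 1 * c 1 0 1 + c 1 0 2 * c 2 0 1) - (c 0 0 0 * c 1 0 1)) = 0" "((c 1 0 1 * c 1 0 2 + c 1 0 2 * c 2 0 2) - (c 0 0 0 * c 1 0 2)) = 0" "((c 1 0 1 * c 1 1 0 + c 1 0 2 * c 2 1 0) - (c 0 1 1 * c 1 1 0 + c 0 1 2 * c 1 2 0)) = 0" "((c 1 0 1 * c 1 2 0 + c 1 0 2 * c 2 2 0) - (c 0 2 1 * c 1 1 0 + c 0 2 2 * c 1 2 0)) = 0" "((c 1 1 0 * c 0 0 0) - (c 1 0 1 * c 1 1 0 + c 1 0 2 * c 1 2 0)) = 0" "((c 1 1 0 * c 0 1 1) - (c 1 1 0 * c 1 0 1)) = 0" "((c 1 1 0 * c 0 1 2) - (c 1 1 0 * c 1 0 2)) = 0" "((c 1 1 0 * c 0 2 1) - (c 1 2 0 * c 1 0 1)) = 0" "((c 1 1 0 * c 0 2 2) - (c 1 2 0 * c 1 0 2)) = 0" "((c 1 2 0 * c 0 0 0) - (c 2 0 1 * c 1 1 0 + c 2 0 2 * c 1 2 0)) =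 0" "((c 1 2 0 * c 0 1 1) - (c 2 1 0 * c 1 0 1)) = 0" "((c 1 2 0 * c 0 1 2) - (c 2 1 0 * c 1 0 2)) = 0" "((c 1 2 0 * c 0 2 1) - (c 2 2 0 * c 1 0 1)) = 0" "((c 1 2 0 * c 0 2 2) - (c 2 2 0 * c 1 0 2)) = 0" "((c 2 0 1 * c 1 0 1 + c 2 0 2 * c 2 0 1) - (c 0 0 0 * c 2 0 1)) = 0" "((c 2 0 1 * c 1 0 2 + c 2 0 2 * c 2 0 2) - (c 0 0 0 * c 2 0 2)) = 0" "((c 2 0 1 * c 1 1 0 + c 2 0 2 * c 2 1 0) - (c 0 1 1 * c 2 1 0 + c 0 1 2 * c 2 2 0)) = 0" "((c 2 0 1 * c 1 2 0 + c 2 0 2 * c 2 2 0) - (c 0 2 1 * c 2 1 0 + c 0 2 2 * c 2 2 0)) = 0" "((c 2 1 0 * c 0 0 0) - (c 1 0 1 * c 2 1 0 + c 1 0 2 * c 2 2 0)) = 0" "((c 2 1 0 * c 0 1 1) - (c 1 1 0 * c 2 0 1)) = 0" "((c 2 1 0 * c 0 1 2) - (c 1 1 0 * c 2 0 2)) = 0" "((c 2 1 0 * c 0 2 1) - (c 1 2 0 * c 2 0 1)) = 0" "((c 2 1 0 * c 0 2 2) - (c 1 2 0 * c 2 0 2)) = 0" "((c 2 2 0 * c 0 0 0) - (c 2 0 1 * c 2 1 0 + c 2 0 2 * c 2 2 0)) = 0" "((c 2 2 0 * c 0 1 1) - (c 2 1 0 * c 2 0 1)) = 0" "((c 2 2 0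 * c 0 1 2) - (c 2 1 0 * c 2 0 2)) = 0" "((c 2 2 0 * c 0 2 1) - (c 2 2 0 * c 2 0 1)) = 0" "((c 2 2 0 * c 0 2 2) - (c 2 2 0 * c 2 0 2)) = 0" shows "sc_associative c"
proof (rule assoc_basis)
  fix i j k m
  note S = sum3 gz[OF g] mult_zero_left mult_zero_right add_0_left add_0_right diff_zero
  have H0000: "(\<Sum>p\<in>UNIV. c 0 0 p * c p 0 0) - (\<Sum>p\<in>UNIV. c 0 0 p * c 0 p 0) = 0" using Z(1) by (simp only: S)
  have H0001: "(\<Sum>p\<in>UNIV. c 0 0 p * c p 0 1) - (\<Sum>p\<in>UNIV. c 0 0 p * c 0 p 1) = 0" by (simp only: S)
  have H0002: "(\<Sum>p\<in>UNIV. c 0 0 p * c p 0 2) - (\<Sum>p\<in>UNIV. c 0 0 p * c 0 p 2) = 0" by (simp only: S)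
  have H0010: "(\<Sum>p\<in>UNIV. c 0 0 p * c p 1 0) - (\<Sum>p\<in>UNIV. c 0 1 p * c 0 p 0) = 0" by (simp only: S)
  have H0011: "(\<Sum>p\<in>UNIV. c 0 0 p * c p 1 1) - (\<Sum>p\<in>UNIV. c 0 1 p * c 0 p 1) = 0" using Z(2) by (simp only: S)
  have H0012: "(\<Sum>p\<in>UNIV. c 0 0 p * c p 1 2) - (\<Sum>p\<in>UNIV. c 0 1 p * c 0 p 2) = 0" using Z(3) by (simp only: S)
  have H0020: "(\<Sum>p\<in>UNIV. c 0 0 p * c p 2 0) - (\<Sum>p\<in>UNIV. c 0 2 p * c 0 p 0) = 0" by (simp only: S)
  have H0021: "(\<Sum>p\<in>UNIV. c 0 0 p * c p 2 1) - (\<Sum>p\<in>UNIV. c 0 2 p * c 0 p 1) = 0" using Z(4) by (simp only: S)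
  have H0022: "(\<Sum>p\<in>UNIV. c 0 0 p * c p 2 2) - (\<Sum>p\<in>UNIV. c 0 2 p * c 0 p 2) = 0" using Z(5) by (simp only: S)
  have H0100: "(\<Sum>p\<in>UNIV. c 0 1 p * c p 0 0) - (\<Sum>p\<in>UNIV. c 1 0 p * c 0 p 0) = 0" by (simp only: S)
  have H0101: "(\<Sum>p\<in>UNIV. c 0 1 p * c p 0 1) - (\<Sum>p\<in>UNIV. c 1 0 p * c 0 p 1) = 0" using Z(6) by (simp only: S)
  have H0102: "(\<Sum>p\<in>UNIV. c 0 1 p * c p 0 2) - (\<Sum>p\<in>UNIV. c 1 0 p * c 0 p 2) = 0" using Z(7) by (simp only: S)
  have H0110: "(\<Sum>p\<in>UNIV. c 0 1 p * c p 1 0) - (\<Sum>p\<in>UNIV. c 1 1 p * c 0 p 0) = 0" using Z(8) by (simp only: S)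
  have H0111: "(\<Sum>p\<in>UNIV. c 0 1 p * c p 1 1) - (\<Sum>p\<in>UNIV. c 1 1 p * c 0 p 1) = 0" by (simp only: S)
  have H0112: "(\<Sum>p\<in>UNIV. c 0 1 p * c p 1 2) - (\<Sum>p\<in>UNIV. c 1 1 p * c 0 p 2) = 0" by (simp only: S)
  have H0120: "(\<Sum>p\<in>UNIV. c 0 1 p * c p 2 0) - (\<Sum>p\<in>UNIV. c 1 2 p * c 0 p 0) = 0" using Z(9) by (simp only: S)
  have H0121: "(\<Sum>p\<in>UNIV. c 0 1 p * c p 2 1) - (\<Sum>p\<in>UNIV. c 1 2 p * c 0 p 1) = 0" by (simp only: S)
  have H0122: "(\<Sum>p\<in>UNIV. c 0 1 p * c p 2 2) - (\<Sum>p\<in>UNIV. c 1 2 p * c 0 p 2) = 0" by (simp only: S)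
  have H0200: "(\<Sum>p\<in>UNIV. c 0 2 p * c p 0 0) - (\<Sum>p\<in>UNIV. c 2 0 p * c 0 p 0) = 0" by (simp only: S)
  have H0201: "(\<Sum>p\<in>UNIV. c 0 2 p * c p 0 1) - (\<Sum>p\<in>UNIV. c 2 0 p * c 0 p 1) = 0" using Z(10) by (simp only: S)
  have H0202: "(\<Sum>p\<in>UNIV. c 0 2 p * c p 0 2) - (\<Sum>p\<in>UNIV. c 2 0 p * c 0 p 2) = 0" using Z(11) by (simp only: S)
  have H0210: "(\<Sum>p\<in>UNIV. c 0 2 p * c p 1 0) - (\<Sum>p\<in>UNIV. c 2 1 p * c 0 p 0) = 0" using Z(12) by (simp only: S)
  have H0211: "(\<Sum>p\<in>UNIV. c 0 2 p * c p 1 1) - (\<Sum>p\<in>UNIV. c 2 1 p * c 0 p 1) = 0" by (simp only: S)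
  have H0212: "(\<Sum>p\<in>UNIV. c 0 2 p * c p 1 2) - (\<Sum>p\<in>UNIV. c 2 1 p * c 0 p 2) = 0" by (simp only: S)
  have H0220: "(\<Sum>p\<in>UNIV. c 0 2 p * c p 2 0) - (\<Sum>p\<in>UNIV. c 2 2 p * c 0 p 0) = 0" using Z(13) by (simp only: S)
  have H0221: "(\<Sum>p\<in>UNIV. c 0 2 p * c p 2 1) - (\<Sum>p\<in>UNIV. c 2 2 p * c 0 p 1) = 0" by (simp only: S)
  have H0222: "(\<Sum>p\<in>UNIV. c 0 2 p * c p 2 2) - (\<Sum>p\<in>UNIV. c 2 2 p * c 0 p 2) = 0" by (simp only: S)
  have H1000: "(\<Sum>p\<in>UNIV. c 1 0 p * c p 0 0) - (\<Sum>p\<in>UNIV. c 0 0 p * c 1 p 0) = 0" by (simp only: S)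
  have H1001: "(\<Sum>p\<in>UNIV. c 1 0 p * c p 0 1) - (\<Sum>p\<in>UNIV. c 0 0 p * c 1 p 1) = 0" using Z(14) by (simp only: S)
  have H1002: "(\<Sum>p\<in>UNIV. c 1 0 p * c p 0 2) - (\<Sum>p\<in>UNIV. c 0 0 p * c 1 p 2) = 0" using Z(15) by (simp only: S)
  have H1010: "(\<Sum>p\<in>UNIV. c 1 0 p * c p 1 0) - (\<Sum>p\<in>UNIV. c 0 1 p * c 1 p 0) = 0" using Z(16) by (simp only: S)
  have H1011: "(\<Sum>p\<in>UNIV. c 1 0 p * c p 1 1) - (\<Sum>p\<in>UNIV. c 0 1 p * c 1 p 1) = 0" by (simp only: S)
  have H1012: "(\<Sum>p\<in>UNIV. c 1 0 p * c p 1 2) - (\<Sum>p\<in>UNIV. c 0 1 p * c 1 p 2) = 0" by (simp only: S)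
  have H1020: "(\<Sum>p\<in>UNIV. c 1 0 p * c p 2 0) - (\<Sum>p\<in>UNIV. c 0 2 p * c 1 p 0) = 0" using Z(17) by (simp only: S)
  have H1021: "(\<Sum>p\<in>UNIV. c 1 0 p * c p 2 1) - (\<Sum>p\<in>UNIV. c 0 2 p * c 1 p 1) = 0" by (simp only: S)
  have H1022: "(\<Sum>p\<in>UNIV. c 1 0 p * c p 2 2) - (\<Sum>p\<in>UNIV. c 0 2 p * c 1 p 2) = 0" by (simp only: S)
  have H1100: "(\<Sum>p\<in>UNIV. c 1 1 p * c p 0 0) - (\<Sum>p\<in>UNIV. c 1 0 p * c 1 p 0) = 0" using Z(18) by (simp only: S)
  have H1101: "(\<Sum>p\<in>UNIV. c 1 1 p * c p 0 1) - (\<Sum>p\<in>UNIV. c 1 0 p * c 1 p 1) = 0" by (simp only: S)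
  have H1102: "(\<Sum>p\<in>UNIV. c 1 1 p * c p 0 2) - (\<Sum>p\<in>UNIV. c 1 0 p * c 1 p 2) = 0" by (simp only: S)
  have H1110: "(\<Sum>p\<in>UNIV. c 1 1 p * c p 1 0) - (\<Sum>p\<in>UNIV. c 1 1 p * c 1 p 0) = 0" by (simp only: S)
  have H1111: "(\<Sum>p\<in>UNIV. c 1 1 p * c p 1 1) - (\<Sum>p\<in>UNIV. c 1 1 p * c 1 p 1) = 0" using Z(19) by (simp only: S)
  have H1112: "(\<Sum>p\<in>UNIV. c 1 1 p * c p 1 2) - (\<Sum>p\<in>UNIV. c 1 1 p * c 1 p 2) = 0" using Z(20) by (simp only: S)
  have H1120: "(\<Sum>p\<in>UNIV. c 1 1 p * c p 2 0) - (\<Sum>p\<in>UNIV. c 1 2 p * c 1 p 0) = 0" by (simp only: S)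
  have H1121: "(\<Sum>p\<in>UNIV. c 1 1 p * c p 2 1) - (\<Sum>p\<in>UNIV. c 1 2 p * c 1 p 1) = 0" using Z(21) by (simp only: S)
  have H1122: "(\<Sum>p\<in>UNIV. c 1 1 p * c p 2 2) - (\<Sum>p\<in>UNIV. c 1 2 p * c 1 p 2) = 0" using Z(22) by (simp only: S)
  have H1200: "(\<Sum>p\<in>UNIV. c 1 2 p * c p 0 0) - (\<Sum>p\<in>UNIV. c 2 0 p * c 1 p 0) = 0" using Z(23) by (simp only: S)
  have H1201: "(\<Sum>p\<in>UNIV. c 1 2 p * c p 0 1) - (\<Sum>p\<in>UNIV. c 2 0 p * c 1 p 1) = 0" by (simp only: S)
  have H1202: "(\<Sum>p\<in>UNIV. c 1 2 p * c p 0 2) - (\<Sum>p\<in>UNIV. c 2 0 p * c 1 p 2) = 0" by (simp only: S)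
  have H1210: "(\<Sum>p\<in>UNIV. c 1 2 p * c p 1 0) - (\<Sum>p\<in>UNIV. c 2 1 p * c 1 p 0) = 0" by (simp only: S)
  have H1211: "(\<Sum>p\<in>UNIV. c 1 2 p * c p 1 1) - (\<Sum>p\<in>UNIV. c 2 1 p * c 1 p 1) = 0" using Z(24) by (simp only: S)
  have H1212: "(\<Sum>p\<in>UNIV. c 1 2 p * c p 1 2) - (\<Sum>p\<in>UNIV. c 2 1 p * c 1 p 2) = 0" using Z(25) by (simp only: S)
  have H1220: "(\<Sum>p\<in>UNIV. c 1 2 p * c p 2 0) - (\<Sum>p\<in>UNIV. c 2 2 p * c 1 p 0) = 0" by (simp only: S)
  have H1221: "(\<Sum>p\<in>UNIV. c 1 2 p * c p 2 1) - (\<Sum>p\<in>UNIV. c 2 2 p * c 1 p 1) = 0" using Z(26) by (simp only: S)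
  have H1222: "(\<Sum>p\<in>UNIV. c 1 2 p * c p 2 2) - (\<Sum>p\<in>UNIV. c 2 2 p * c 1 p 2) = 0" using Z(27) by (simp only: S)
  have H2000: "(\<Sum>p\<in>UNIV. c 2 0 p * c p 0 0) - (\<Sum>p\<in>UNIV. c 0 0 p * c 2 p 0) = 0" by (simp only: S)
  have H2001: "(\<Sum>p\<in>UNIV. c 2 0 p * c p 0 1) - (\<Sum>p\<in>UNIV. c 0 0 p * c 2 p 1) = 0" using Z(28) by (simp only: S)
  have H2002: "(\<Sum>p\<in>UNIV. c 2 0 p * c p 0 2) - (\<Sum>p\<in>UNIV. c 0 0 p * c 2 p 2) = 0" using Z(29) by (simp only: S)
  have H2010: "(\<Sum>p\<in>UNIV. c 2 0 p * c p 1 0) - (\<Sum>p\<in>UNIV. c 0 1 p * c 2 p 0) = 0" using Z(30) by (simp only: S)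
  have H2011: "(\<Sum>p\<in>UNIV. c 2 0 p * c p 1 1) - (\<Sum>p\<in>UNIV. c 0 1 p * c 2 p 1) = 0" by (simp only: S)
  have H2012: "(\<Sum>p\<in>UNIV. c 2 0 p * c p 1 2) - (\<Sum>p\<in>UNIV. c 0 1 p * c 2 p 2) = 0" by (simp only: S)
  have H2020: "(\<Sum>p\<in>UNIV. c 2 0 p * c p 2 0) - (\<Sum>p\<in>UNIV. c 0 2 p * c 2 p 0) = 0" using Z(31) by (simp only: S)
  have H2021: "(\<Sum>p\<in>UNIV. c 2 0 p * c p 2 1) - (\<Sum>p\<in>UNIV. c 0 2 p * c 2 p 1) = 0" by (simp only: S)
  have H2022: "(\<Sum>p\<in>UNIV. c 2 0 p * c p 2 2) - (\<Sum>p\<in>UNIV. c 0 2 p * c 2 p 2) = 0" by (simp only: S)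
  have H2100: "(\<Sum>p\<in>UNIV. c 2 1 p * c p 0 0) - (\<Sum>p\<in>UNIV. c 1 0 p * c 2 p 0) = 0" using Z(32) by (simp only: S)
  have H2101: "(\<Sum>p\<in>UNIV. c 2 1 p * c p 0 1) - (\<Sum>p\<in>UNIV. c 1 0 p * c 2 p 1) = 0" by (simp only: S)
  have H2102: "(\<Sum>p\<in>UNIV. c 2 1 p * c p 0 2) - (\<Sum>p\<in>UNIV. c 1 0 p * c 2 p 2) = 0" by (simp only: S)
  have H2110: "(\<Sum>p\<in>UNIV. c 2 1 p * c p 1 0) - (\<Sum>p\<in>UNIV. c 1 1 p * c 2 p 0) = 0" by (simp only: S)
  have H2111: "(\<Sum>p\<in>UNIV. c 2 1 p * c p 1 1) - (\<Sum>p\<in>UNIV. c 1 1 p * c 2 p 1) = 0" using Z(33) by (simp only: S)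
  have H2112: "(\<Sum>p\<in>UNIV. c 2 1 p * c p 1 2) - (\<Sum>p\<in>UNIV. c 1 1 p * c 2 p 2) = 0" using Z(34) by (simp only: S)
  have H2120: "(\<Sum>p\<in>UNIV. c 2 1 p * c p 2 0) - (\<Sum>p\<in>UNIV. c 1 2 p * c 2 p 0) = 0" by (simp only: S)
  have H2121: "(\<Sum>p\<in>UNIV. c 2 1 p * c p 2 1) - (\<Sum>p\<in>UNIV. c 1 2 p * c 2 p 1) = 0" using Z(35) by (simp only: S)
  have H2122: "(\<Sum>p\<in>UNIV. c 2 1 p * c p 2 2) - (\<Sum>p\<in>UNIV. c 1 2 p * c 2 p 2) = 0" using Z(36) by (simp only: S)
  have H2200: "(\<Sum>p\<in>UNIV. c 2 2 p * c p 0 0) - (\<Sum>p\<in>UNIV. c 2 0 p * c 2 p 0) = 0" using Z(37) by (simp only: S)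
  have H2201: "(\<Sum>p\<in>UNIV. c 2 2 p * c p 0 1) - (\<Sum>p\<in>UNIV. c 2 0 p * c 2 p 1) = 0" by (simp only: S)
  have H2202: "(\<Sum>p\<in>UNIV. c 2 2 p * c p 0 2) - (\<Sum>p\<in>UNIV. c 2 0 p * c 2 p 2) = 0" by (simp only: S)
  have H2210: "(\<Sum>p\<in>UNIV. c 2 2 p * c p 1 0) - (\<Sum>p\<in>UNIV. c 2 1 p * c 2 p 0) = 0" by (simp only: S)
  have H2211: "(\<Sum>p\<in>UNIV. c 2 2 p * c p 1 1) - (\<Sum>p\<in>UNIV. c 2 1 p * c 2 p 1) = 0" using Z(38) by (simp only: S)
  have H2212: "(\<Sum>p\<in>UNIV. c 2 2 p * c p 1 2) - (\<Sum>p\<in>UNIV. c 2 1 p * c 2 p 2) = 0" using Z(39) by (simp only: S)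
  have H2220: "(\<Sum>p\<in>UNIV. c 2 2 p * c p 2 0) - (\<Sum>p\<in>UNIV. c 2 2 p * c 2 p 0) = 0" by (simp only: S)
  have H2221: "(\<Sum>p\<in>UNIV. c 2 2 p * c p 2 1) - (\<Sum>p\<in>UNIV. c 2 2 p * c 2 p 1) = 0" using Z(40) by (simp only: S)
  have H2222: "(\<Sum>p\<in>UNIV. c 2 2 p * c p 2 2) - (\<Sum>p\<in>UNIV. c 2 2 p * c 2 p 2) = 0" using Z(41) by (simp only: S)
  have "\<forall>i j k m. (\<Sum>p\<in>UNIV. c i j p * c p k m) - (\<Sum>p\<in>UNIV. c j k p * c i p m) = 0"
    unfolding forall3 using H0000 H0001 H0002 H0010 H0011 H0012 H0020 H0021 H0022 H0100 H0101 H0102 H0110 H0111 H0112 H0120 H0121 H0122 H0200 H0201 H0202 H0210 H0211 H0212 H0220 H0221 H0222 H1000 H1001 H1002 H1010 H1011 H1012 H1020 H1021 H1022 H1100 H1101 H1102 H1110 H1111 H1112 H1120 H1121 H1122 H1200 H1201 H1202 H1210 H1211 H1212 H1220 H1221 H1222 H2000 H2001 H2002 H2010 H2011 H2012 H2020 H2021 H2022 H2100 H2101 H2102 H2110 H2111 H2112 H2120 H2121 H2122 H2200 H2201 H2202 H2210 H2211 H2212 H2220 H2221 H2222 by blast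
  then show "(\<Sum>p\<in>UNIV. c i j p * c p k m) - (\<Sum>p\<in>UNIV. c j k p * c i p m) = 0" by blast
qed

lemma assoc_nz: assumes g: "graded_sc c" and b: "binary_assoc_super c" and a: "c 0 0 0 \<noteq> 0" shows "sc_associative c"
proof (rule assoc_if[OF g])
  show "((c 0 0 0 * c 0 0 0) - (c 0 0 0 * c 0 0 0)) = 0" by simp
  show "((c 0 0 0 * c 0 1 1) - (c 0 1 1 * c 0 1 1 + c 0 1 2 * c 0 2 1)) = 0" using a Ered[OF g b] by algebra
  show "((c 0 0 0 * c 0 1 2) - (c 0 1 1 * c 0 1 2 + c 0 1 2 * c 0 2 2)) = 0" using a Ered[OF g b] by algebra
  show "((c 0 0 0 * c 0 2 1) - (c 0 2 1 * c 0 1 1 + c 0 2 2 * c 0 2 1)) = 0" using a Ered[OF g b] by algebra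
  show "((c 0 0 0 * c 0 2 2) - (c 0 2 1 * c 0 1 2 + c 0 2 2 * c 0 2 2)) = 0" using a Ered[OF g b] by algebra
  show "((c 0 1 1 * c 1 0 1 + c 0 1 2 * c 2 0 1) - (c 1 0 1 * c 0 1 1 + c 1 0 2 * c 0 2 1)) = 0" using a Ered[OF g b] by algebra
  show "((c 0 1 1 * c 1 0 2 + c 0 1 2 * c 2 0 2) - (c 1 0 1 * c 0 1 2 + c 1 0 2 * c 0 2 2)) = 0" using a Ered[OF g b] by algebra
  show "((c 0 1 1 * c 1 1 0 + c 0 1 2 * c 2 1 0) - (c 1 1 0 * c 0 0 0)) = 0" using a Ered[OF g b] by algebra
  show "((c 0 1 1 * c 1 2 0 + c 0 1 2 * c 2 2 0) - (c 1 2 0 * c 0 0 0)) = 0" using a Ered[OF g b] by algebra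
  show "((c 0 2 1 * c 1 0 1 + c 0 2 2 * c 2 0 1) - (c 2 0 1 * c 0 1 1 + c 2 0 2 * c 0 2 1)) = 0" using a Ered[OF g b] by algebra
  show "((c 0 2 1 * c 1 0 2 + c 0 2 2 * c 2 0 2) - (c 2 0 1 * c 0 1 2 + c 2 0 2 * c 0 2 2)) = 0" using a Ered[OF g b] by algebra
  show "((c 0 2 1 * c 1 1 0 + c 0 2 2 * c 2 1 0) - (c 2 1 0 * c 0 0 0)) = 0" using a Ered[OF g b] by algebra
  show "((c 0 2 1 * c 1 2 0 + c 0 2 2 * c 2 2 0) - (c 2 2 0 * c 0 0 0)) = 0" using a Ered[OF g b] by algebra
  show "((c 1 0 1 * c 1 0 1 + c 1 0 2 * c 2 0 1) - (c 0 0 0 * c 1 0 1)) = 0" using a Ered[OF g b] by algebra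
  show "((c 1 0 1 * c 1 0 2 + c 1 0 2 * c 2 0 2) - (c 0 0 0 * c 1 0 2)) = 0" using a Ered[OF g b] by algebra
  show "((c 1 0 1 * c 1 1 0 + c 1 0 2 * c 2 1 0) - (c 0 1 1 * c 1 1 0 + c 0 1 2 * c 1 2 0)) = 0" using a Ered[OF g b] by algebra
  show "((c 1 0 1 * c 1 2 0 + c 1 0 2 * c 2 2 0) - (c 0 2 1 * c 1 1 0 + c 0 2 2 * c 1 2 0)) = 0" using a Ered[OF g b] by algebra
  show "((c 1 1 0 * c 0 0 0) - (c 1 0 1 * c 1 1 0 + c 1 0 2 * c 1 2 0)) = 0" using a Ered[OF g b] by algebra
  show "((c 1 1 0 * c 0 1 1) - (c 1 1 0 * c 1 0 1)) = 0" using a Ered[OF g b] by algebra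
  show "((c 1 1 0 * c 0 1 2) - (c 1 1 0 * c 1 0 2)) = 0" using a Ered[OF g b] by algebra
  show "((c 1 1 0 * c 0 2 1) - (c 1 2 0 * c 1 0 1)) = 0" using a Ered[OF g b] by algebra
  show "((c 1 1 0 * c 0 2 2) - (c 1 2 0 * c 1 0 2)) = 0" using a Ered[OF g b] by algebra
  show "((c 1 2 0 * c 0 0 0) - (c 2 0 1 * c 1 1 0 + c 2 0 2 * c 1 2 0)) = 0" using a Ered[OF g b] by algebra
  show "((c 1 2 0 * c 0 1 1) - (c 2 1 0 * c 1 0 1)) = 0" using a Ered[OF g b] by algebra
  show "((c 1 2 0 * c 0 1 2) - (c 2 1 0 * c 1 0 2)) = 0" using a Ered[OF g b] by algebra
  show "((c 1 2 0 * c 0 2 1) - (c 2 2 0 * c 1 0 1)) = 0" using a Ered[OF g b] by algebra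
  show "((c 1 2 0 * c 0 2 2) - (c 2 2 0 * c 1 0 2)) = 0" using a Ered[OF g b] by algebra
  show "((c 2 0 1 * c 1 0 1 + c 2 0 2 * c 2 0 1) - (c 0 0 0 * c 2 0 1)) = 0" using a Ered[OF g b] by algebra
  show "((c 2 0 1 * c 1 0 2 + c 2 0 2 * c 2 0 2) - (c 0 0 0 * c 2 0 2)) = 0" using a Ered[OF g b] by algebra
  show "((c 2 0 1 * c 1 1 0 + c 2 0 2 * c 2 1 0) - (c 0 1 1 * c 2 1 0 + c 0 1 2 * c 2 2 0)) = 0" using a Ered[OF g b] by algebra
  show "((c 2 0 1 * c 1 2 0 + c 2 0 2 * c 2 2 0) - (c 0 2 1 * c 2 1 0 + c 0 2 2 * c 2 2 0)) = 0" using a Ered[OF g b] by algebra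
  show "((c 2 1 0 * c 0 0 0) - (c 1 0 1 * c 2 1 0 + c 1 0 2 * c 2 2 0)) = 0" using a Ered[OF g b] by algebra
  show "((c 2 1 0 * c 0 1 1) - (c 1 1 0 * c 2 0 1)) = 0" using a Ered[OF g b] by algebra
  show "((c 2 1 0 * c 0 1 2) - (c 1 1 0 * c 2 0 2)) = 0" using a Ered[OF g b] by algebra
  show "((c 2 1 0 * c 0 2 1) - (c 1 2 0 * c 2 0 1)) = 0" using a Ered[OF g b] by algebra
  show "((c 2 1 0 * c 0 2 2) - (c 1 2 0 * c 2 0 2)) = 0" using a Ered[OF g b] by algebra
  show "((c 2 2 0 * c 0 0 0) - (c 2 0 1 * c 2 1 0 + c 2 0 2 * c 2 2 0)) = 0" using a Ered[OF g b] by algebra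
  show "((c 2 2 0 * c 0 1 1) - (c 2 1 0 * c 2 0 1)) = 0" using a Ered[OF g b] by algebra
  show "((c 2 2 0 * c 0 1 2) - (c 2 1 0 * c 2 0 2)) = 0" using a Ered[OF g b] by algebra
  show "((c 2 2 0 * c 0 2 1) - (c 2 2 0 * c 2 0 1)) = 0" using a Ered[OF g b] by algebra
  show "((c 2 2 0 * c 0 2 2) - (c 2 2 0 * c 2 0 2)) = 0" using a Ered[OF g b] by algebra
qed

definition mat3 :: "complex \<Rightarrow> complex \<Rightarrow> complex \<Rightarrow> complex \<Rightarrow> complex \<Rightarrow> complex \<Rightarrow> complex \<Rightarrow> complex \<Rightarrow> complex \<Rightarrow> complex^3^3" where
  "mat3 a00 a01 a02 a10 a11 a12 a20 a21 a22 = (\<chi> i j.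
     if i = 0 then (if j = 0 then a00 else if j = 1 then a01 else a02)
     else if i = 1 then (if j = 0 then a10 else if j = 1 then a11 else a12)
     else (if j = 0 then a20 else if j = 1 then a21 else a22))"

lemma mat3_nth[simp]:
  "mat3 a00 a01 a02 a10 a11 a12 a20 a21 a22 $ 0 $ 0 = a00"
  "mat3 a00 a01 a02 a10 a11 a12 a20 a21 a22 $ 0 $ 1 = a01"
  "mat3 a00 a01 a02 a10 a11 a12 a20 a21 a22 $ 0 $ 2 = a02"
  "mat3 a00 a01 a02 a10 a11 a12 a20 a21 a22 $ 1 $ 0 = a10"
  "mat3 a00 a01 a02 a10 a11 a12 a20 a21 a22 $ 1 $ 1 = a11"
  "mat3 a00 a01 a02 a10 a11 a12 a20 a21 a22 $ 1 $ 2 = a12"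
  "mat3 a00 a01 a02 a10 a11 a12 a20 a21 a22 $ 2 $ 0 = a20"
  "mat3 a00 a01 a02 a10 a11 a12 a20 a21 a22 $ 2 $ 1 = a21"
  "mat3 a00 a01 a02 a10 a11 a12 a20 a21 a22 $ 2 $ 2 = a22"
  by (simp_all add: mat3_def)

lemma smult_bilin: fixes P :: "complex^3^3" shows "smult c (P *v u) (P *v w) $ k =
   (\<Sum>i\<in>UNIV. \<Sum>j\<in>UNIV. u$i * w$j * (smult c (column i P) (column j P) $ k))"
  unfolding smult_def matrix_vector_mult_def column_def
  by (simp add: sum3 algebra_simps)

lemma Pv_smult: fixes P :: "complex^3^3" shows "(P *v smult c' u w) $ k = (\<Sum>i\<in>UNIV. \<Sum>j\<in>UNIV. u$i * w$j * ((P *v (\<chi> l. c' i j l)) $ k))"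
  unfolding smult_def matrix_vector_mult_def
  by (simp add: sum3 algebra_simps)

lemma iso_intro:
  fixes P M :: "complex^3^3"
  assumes MP: "M ** P = mat 1" and PM: "P ** M = mat 1"
  and blk: "M$0$1 = 0" "M$0$2 = 0" "M$1$0 = 0" "M$2$0 = 0"
  and prod: "\<And>i j. smult c (column i P) (column j P) = P *v (\<chi> k. c' i j k)"
  shows "sc_iso c c'"
  unfolding sc_iso_def
proof (intro exI conjI allI impI)
  show "invertible M" unfolding invertible_def using MP PM by blast
next
  fix x d assume h: "homog x d"
  show "homog (M *v x) d"
    unfolding homog_def
  proof (intro allI impI)
    fix i assume di: "deg i \<noteq> d"
    show "(M *v x) $ i = 0"
    proof (cases "i = 0")
      case True
      then have "d \<noteq> 0" using di by simp
      then have "x$1 = 0 \<or> x$2 = 0 \<longrightarrow> True" by simp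
      have "d \<noteq> 1 \<Longrightarrow> x$1 = 0 \<and> x$2 = 0" using h unfolding homog_def by (metis deg_simps)
      moreover have "x$0 = 0" using h \<open>d \<noteq> 0\<close> unfolding homog_def by (metis deg_simps(1))
      ultimately show ?thesis using True blk
        by (cases "d = 1") (auto simp: matrix_vector_mult_def sum3)
    next
      case False
      then have "deg i = 1" by (simp add: deg_def)
      then have "d \<noteq> 1" using di by simp
      have x0: "d \<noteq> 0 \<Longrightarrow> x$0 = 0" using h unfolding homog_def by (metis deg_simps(1))
      have x12: "x$1 = 0" "x$2 = 0" using h \<open>d \<noteq> 1\<close> unfolding homog_def by (metis deg_simps)+
      have "i = 1 \<or> i = 2" using False ne3 by blast
      then show ?thesis using blk x0 x12
        by (cases "d = 0") (auto simp: matrix_vector_mult_def sum3)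
    qed
  qed
next
  fix x y
  have bil: "smult c (P *v u) (P *v w) = P *v smult c' u w" for u w
    by (simp add: vec_eq_iff smult_bilin Pv_smult prod)
  have xe: "P *v (M *v x) = x" "P *v (M *v y) = y"
    by (simp_all add: matrix_vector_mul_assoc PM)
  have "M *v smult c x y = M *v smult c (P *v (M *v x)) (P *v (M *v y))" using xe by simp
  also have "\<dots> = M *v (P *v smult c' (M *v x) (M *v y))" using bil by simp
  also have "\<dots> = smult c' (M *v x) (M *v y)" by (simp add: matrix_vector_mul_assoc MP)
  finally show "M *v smult c x y = smult c' (M *v x) (M *v y)" .
qed

definition stdalg :: "complex \<Rightarrow> complex \<Rightarrow> complex \<Rightarrow> complex \<Rightarrow> complex \<Rightarrow> complex \<Rightarrow> sc3" where
  "stdalg L Mu B11 B12 B21 B22 i j k =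
    (if i = 0 \<and> j = 1 \<and> k = 2 then L else if i = 1 \<and> j = 0 \<and> k = 2 then Mu
     else if i = 1 \<and> j = 1 \<and> k = 0 then B11 else if i = 1 \<and> j = 2 \<and> k = 0 then B12
     else if i = 2 \<and> j = 1 \<and> k = 0 then B21 else if i = 2 \<and> j = 2 \<and> k = 0 then B22 else 0)"

definition bf :: "sc3 \<Rightarrow> complex \<Rightarrow> complex \<Rightarrow> complex \<Rightarrow> complex \<Rightarrow> complex" where
  "bf c u1 u2 v1 v2 = u1 * v1 * c 1 1 0 + u1 * v2 * c 1 2 0 + u2 * v1 * c 2 1 0 + u2 * v2 * c 2 2 0"

lemma key:
  fixes c :: sc3 and p xa xb ya yb lam mu L Mu B11 B12 B21 B22 :: complex
  assumes g: "graded_sc c" and a0: "c 0 0 0 = 0"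
  and d: "xa*yb - xb*ya \<noteq> 0" and p: "p \<noteq> 0"
  and l1: "c 0 1 1 * xa + c 0 2 1 * xb = lam * ya" "c 0 1 2 * xa + c 0 2 2 * xb = lam * yb"
  and r1: "c 1 0 1 * xa + c 2 0 1 * xb = mu * ya" "c 1 0 2 * xa + c 2 0 2 * xb = mu * yb"
  and l2: "c 0 1 1 * ya + c 0 2 1 * yb = 0" "c 0 1 2 * ya + c 0 2 2 * yb = 0"
  and r2: "c 1 0 1 * ya + c 2 0 1 * yb = 0" "c 1 0 2 * ya + c 2 0 2 * yb = 0"
  and tL: "L = p * lam" and tM: "Mu = p * mu"
  and t11: "bf c xa xb xa xb = p * B11" and t12: "bf c xa xb ya yb = p * B12"
  and t21: "bf c ya yb xa xb = p * B21" and t22: "bf c ya yb ya yb = p * B22"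
  shows "sc_iso c (stdalg L Mu B11 B12 B21 B22)"
proof -
  define dd where "dd = xa*yb - xb*ya"
  have dd: "dd \<noteq> 0" using d dd_def by simp
  have sq: "xa * (xa * (yb * yb)) + xb * (xb * (ya * ya)) \<noteq> xa * (xb * (ya * (yb * 2)))"
  proof
    assume "xa * (xa * (yb * yb)) + xb * (xb * (ya * ya)) = xa * (xb * (ya * (yb * 2)))"
    then have "(xa*yb - xb*ya)^2 = 0" by (simp add: power2_eq_square algebra_simps)
    then show False using d by simp
  qed
  define P where "P = mat3 p 0 0 0 xa ya 0 xb yb"
  define M where "M = mat3 (1/p) 0 0 0 (yb/dd) (-ya/dd) 0 (-xb/dd) (xa/dd)"
  show ?thesis
  proof (rule iso_intro[of M P])
    show "M ** P = mat 1" unfolding M_def P_def using dd p sq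
      by (simp add: vec_eq_iff forall3 matrix_matrix_mult_def sum3 mat_def field_simps dd_def)
    show "P ** M = mat 1" unfolding M_def P_def using dd p sq
      by (simp add: vec_eq_iff forall3 matrix_matrix_mult_def sum3 mat_def field_simps dd_def)
    show "M$0$1 = 0" "M$0$2 = 0" "M$1$0 = 0" "M$2$0 = 0" unfolding M_def by simp_all
    have "\<forall>i j. smult c (column i P) (column j P) = P *v (\<chi> k. stdalg L Mu B11 B12 B21 B22 i j k)"
      unfolding forall3 vec_eq_iff P_def
      using gz[OF g] a0 l1 r1 l2 r2 tL tM t11 t12 t21 t22
      by (simp add: smult_comp column_def matrix_vector_mult_def sum3 stdalg_def bf_def algebra_simps) algebra
    then show "\<And>i j. smult c (column i P) (column j P) = P *v (\<chi> k. stdalg L Mu B11 B12 B21 B22 i j k)"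
      by blast
  qed
qed

definition blk :: "complex^3^3 \<Rightarrow> bool" where
  "blk A \<longleftrightarrow> A$0$1 = 0 \<and> A$0$2 = 0 \<and> A$1$0 = 0 \<and> A$2$0 = 0"

lemma blk_homog:
  assumes bl: "blk A" and h: "homog x d"
  shows "homog (A *v x) d"
  unfolding homog_def
proof (intro allI impI)
  fix i assume di: "deg i \<noteq> d"
  have blk: "A$0$1 = 0" "A$0$2 = 0" "A$1$0 = 0" "A$2$0 = 0" using bl blk_def by auto
  show "(A *v x) $ i = 0"
  proof (cases "i = 0")
    case True
    then have "d \<noteq> 0" using di by simp
    have "d \<noteq> 1 \<Longrightarrow> x$1 = 0 \<and> x$2 = 0" using h unfolding homog_def by (metis deg_simps)
    moreover have "x$0 = 0" using h \<open>d \<noteq> 0\<close> unfolding homog_def by (metis deg_simps(1))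
    ultimately show ?thesis using True blk
      by (cases "d = 1") (auto simp: matrix_vector_mult_def sum3)
  next
    case False
    then have "deg i = 1" by (simp add: deg_def)
    then have "d \<noteq> 1" using di by simp
    have x0: "d \<noteq> 0 \<Longrightarrow> x$0 = 0" using h unfolding homog_def by (metis deg_simps(1))
    have x12: "x$1 = 0" "x$2 = 0" using h \<open>d \<noteq> 1\<close> unfolding homog_def by (metis deg_simps)+
    have "i = 1 \<or> i = 2" using False ne3 by blast
    then show ?thesis using blk x0 x12
      by (cases "d = 0") (auto simp: matrix_vector_mult_def sum3)
  qed
qed

lemma iso_prod:
  fixes P M :: "complex^3^3"
  assumes MP: "M ** P = mat 1" and PM: "P ** M = mat 1"
  and prod: "\<And>i j. smult c (column i P) (column j P) = P *v (\<chi> k. c' i j k)"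
  shows "M *v smult c x y = smult c' (M *v x) (M *v y)"
proof -
  have bil: "smult c (P *v u) (P *v w) = P *v smult c' u w" for u w
    by (simp add: vec_eq_iff smult_bilin Pv_smult prod)
  have xe: "P *v (M *v x) = x" "P *v (M *v y) = y"
    by (simp_all add: matrix_vector_mul_assoc PM)
  have "M *v smult c x y = M *v smult c (P *v (M *v x)) (P *v (M *v y))" using xe by simp
  also have "\<dots> = M *v (P *v smult c' (M *v x) (M *v y))" using bil by simp
  also have "\<dots> = smult c' (M *v x) (M *v y)" by (simp add: matrix_vector_mul_assoc MP)
  finally show ?thesis .
qed

definition isodata :: "sc3 \<Rightarrow> sc3 \<Rightarrow> complex^3^3 \<Rightarrow> complex^3^3 \<Rightarrow> bool" where
  "isodata c c' M P \<longleftrightarrow> M ** P = mat 1 \<and> P ** M = mat 1 \<and> blk M \<and> blk P \<and>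
     (\<forall>x y. M *v smult c x y = smult c' (M *v x) (M *v y))"

lemma isodata_iso: "isodata c c' M P \<Longrightarrow> sc_iso c c'"
  unfolding isodata_def sc_iso_def invertible_def using blk_homog by blast

lemma iso_sassoc:
  assumes "\<forall>x y. M *v smult c x y = smult c' (M *v x) (M *v y)"
  shows "M *v sassoc c x y z = sassoc c' (M *v x) (M *v y) (M *v z)"
  unfolding sassoc_def using assms by (simp add: matrix_vector_mult_diff_distrib)

lemma mv_neg: fixes M :: "complex^3^3" shows "M *v (- v) = - (M *v v)"
  by (simp add: matrix_vector_mult_def vec_eq_iff sum_negf)

lemma isodata_binary:
  assumes iso: "isodata c c' M P" and b: "binary_assoc_super c"
  shows "binary_assoc_super c'"
  unfolding binary_assoc_super_def
proof (intro allI impI)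
  fix x y z :: "complex^3" and dx dy dz :: nat
  assume h: "dx < 2 \<and> dy < 2 \<and> dz < 2 \<and> homog x dx \<and> homog y dy \<and> homog z dz"
  have MP: "M ** P = mat 1" and PM: "P ** M = mat 1" and bP: "blk P"
    and pr: "\<forall>x y. M *v smult c x y = smult c' (M *v x) (M *v y)"
    using iso unfolding isodata_def by auto
  have hx: "homog (P *v x) dx" "homog (P *v y) dy" "homog (P *v z) dz"
    using h bP blk_homog by auto
  have e: "M *v (P *v v) = v" for v by (simp add: matrix_vector_mul_assoc MP)
  have S: "sassoc c' x y z = M *v sassoc c (P *v x) (P *v y) (P *v z)" for x y z
    using iso_sassoc[OF pr] e by simp
  from b hx h have e1:
    "sassoc c (P *v x) (P *v y) (P *v z) = (- ((-1) ^ (dy * dz))) *s sassoc c (P *v x) (P *v z) (P *v y)"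
    and e2: "sassoc c (P *v x) (P *v y) (P *v z) = (- ((-1) ^ (dx * dy))) *s sassoc c (P *v y) (P *v x) (P *v z)"
    unfolding binary_assoc_super_def by blast+
  have "sassoc c' x y z = M *v ((- ((-1) ^ (dy * dz))) *s sassoc c (P *v x) (P *v z) (P *v y))"
    using S e1 by metis
  also have "\<dots> = (- ((-1) ^ (dy * dz))) *s sassoc c' x z y"
    by (simp only: vector_scalar_commute S)
  finally have 1: "sassoc c' x y z = (- ((-1) ^ (dy * dz))) *s sassoc c' x z y" .
  have "sassoc c' x y z = M *v ((- ((-1) ^ (dx * dy))) *s sassoc c (P *v y) (P *v x) (P *v z))"
    using S e2 by metis
  also have "\<dots> = (- ((-1) ^ (dx * dy))) *s sassoc c' y x z"
    by (simp only: vector_scalar_commute S)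
  finally have 2: "sassoc c' x y z = (- ((-1) ^ (dx * dy))) *s sassoc c' y x z" .
  show "sassoc c' x y z = (- ((-1) ^ (dy * dz))) *s sassoc c' x z y \<and>
        sassoc c' x y z = (- ((-1) ^ (dx * dy))) *s sassoc c' y x z"
    using 1 2 by blast
qed

lemma isodata_assoc:
  assumes iso: "isodata c c' M P" and a: "sc_associative c'"
  shows "sc_associative c"
  unfolding sc_associative_def
proof (intro allI)
  fix x y z
  have MP: "M ** P = mat 1" and PM: "P ** M = mat 1"
    and pr: "\<forall>x y. M *v smult c x y = smult c' (M *v x) (M *v y)"
    using iso unfolding isodata_def by auto
  have "sassoc c x y z = P *v (M *v sassoc c x y z)" by (simp add: matrix_vector_mul_assoc PM)
  also have "\<dots> = 0" using iso_sassoc[OF pr] a unfolding sc_associative_def by simp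
  finally show "sassoc c x y z = 0" .
qed

lemma iso_trans:
  assumes "sc_iso c c'" "sc_iso c' c''"
  shows "sc_iso c c''"
proof -
  obtain M1 where M1: "invertible M1" "\<forall>x d. homog x d \<longrightarrow> homog (M1 *v x) d"
    "\<forall>x y. M1 *v smult c x y = smult c' (M1 *v x) (M1 *v y)"
    using assms(1) unfolding sc_iso_def by blast
  obtain M2 where M2: "invertible M2" "\<forall>x d. homog x d \<longrightarrow> homog (M2 *v x) d"
    "\<forall>x y. M2 *v smult c' x y = smult c'' (M2 *v x) (M2 *v y)"
    using assms(2) unfolding sc_iso_def by blast
  show ?thesis unfolding sc_iso_def
    apply (rule exI[of _ "M2 ** M1"])
    using M1 M2 by (simp add: invertible_mult matrix_vector_mul_assoc[symmetric])
qed

definition transp :: "sc3 \<Rightarrow> complex^3^3 \<Rightarrow> complex^3^3 \<Rightarrow> sc3" where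
  "transp c P M i j k = (M *v smult c (column i P) (column j P)) $ k"

lemma isodata_transp:
  assumes MP: "M ** P = mat 1" and PM: "P ** M = mat 1" and "blk M" "blk P"
  shows "isodata c (transp c P M) M P"
proof -
  have "smult c (column i P) (column j P) = P *v (\<chi> k. transp c P M i j k)" for i j
    unfolding transp_def by (simp add: matrix_vector_mul_assoc PM)
  then show ?thesis unfolding isodata_def using assms iso_prod[OF MP PM] by blast
qed

lemma smult_homog:
  assumes g: "graded_sc c" and hx: "homog x dx" and hy: "homog y dy"
  shows "homog (smult c x y) ((dx + dy) mod 2)"
  unfolding homog_def
proof (intro allI impI)
  fix k assume dk: "deg k \<noteq> (dx + dy) mod 2"
  have "x$i * y$j * c i j k = 0" for i j
  proof (cases "deg i = dx \<and> deg j = dy")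
    case True
    then have "c i j k = 0" using g dk unfolding graded_sc_def by auto
    then show ?thesis by simp
  next
    case False
    then show ?thesis using hx hy unfolding homog_def by auto
  qed
  then show "smult c x y $ k = 0" by (simp only: smult_comp sum.neutral_const)
qed

lemma column_homog: "blk P \<Longrightarrow> homog (column i P) (deg i)"
  unfolding homog_def column_def blk_def
  using ne3 by (auto simp: deg_def)

lemma transp_graded:
  assumes g: "graded_sc c" and "blk M" "blk P"
  shows "graded_sc (transp c P M)"
  unfolding graded_sc_def
proof (intro allI impI)
  fix i j k assume nz: "transp c P M i j k \<noteq> 0"
  have "homog (M *v smult c (column i P) (column j P)) ((deg i + deg j) mod 2)"
    using blk_homog[OF assms(2) smult_homog[OF g column_homog[OF assms(3)] column_homog[OF assms(3)]]] .
  then show "deg k = (deg i + deg j) mod 2" using nz unfolding homog_def transp_def by auto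
qed

lemma nf_rels:
  assumes g: "graded_sc c" and b: "binary_assoc_super c"
  and n: "c 0 0 0 = 0" "c 0 1 1 = 0" "c 0 1 2 = lam" "c 0 2 1 = 0" "c 0 2 2 = 0"
         "c 1 0 1 = 0" "c 1 0 2 = mu" "c 2 0 1 = 0" "c 2 0 2 = 0"
  shows "lam * c 2 2 0 = 0" "mu * c 2 2 0 = 0" "mu * c 1 2 0 + lam * c 2 1 0 = 0"
    "lam * c 1 2 0 = (lam + mu) * c 2 1 0"
  using Ered[OF g b] n by algebra+

lemma nf_assoc:
  assumes g: "graded_sc c" and b: "binary_assoc_super c"
  and n: "c 0 0 0 = 0" "c 0 1 1 = 0" "c 0 1 2 = lam" "c 0 2 1 = 0" "c 0 2 2 = 0"
         "c 1 0 1 = 0" "c 1 0 2 = mu" "c 2 0 1 = 0" "c 2 0 2 = 0"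
  and z: "(lam - mu) * c 1 1 0 = 0" "mu * c 1 2 0 = 0" "lam * c 2 1 0 = 0"
  shows "sc_associative c"
proof (rule assoc_if[OF g])
  note F = Ered[OF g b] n z nf_rels[OF g b n]
  show "((c 0 0 0 * c 0 0 0) - (c 0 0 0 * c 0 0 0)) = 0" by simp
  show "((c 0 0 0 * c 0 1 1) - (c 0 1 1 * c 0 1 1 + c 0 1 2 * c 0 2 1)) = 0" using F by algebra
  show "((c 0 0 0 * c 0 1 2) - (c 0 1 1 * c 0 1 2 + c 0 1 2 * c 0 2 2)) = 0" using F by algebra
  show "((c 0 0 0 * c 0 2 1) - (c 0 2 1 * c 0 1 1 + c 0 2 2 * c 0 2 1)) = 0" using F by algebra
  show "((c 0 0 0 * c 0 2 2) - (c 0 2 1 * c 0 1 2 + c 0 2 2 * c 0 2 2)) = 0" using F by algebra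
  show "((c 0 1 1 * c 1 0 1 + c 0 1 2 * c 2 0 1) - (c 1 0 1 * c 0 1 1 + c 1 0 2 * c 0 2 1)) = 0" using F by algebra
  show "((c 0 1 1 * c 1 0 2 + c 0 1 2 * c 2 0 2) - (c 1 0 1 * c 0 1 2 + c 1 0 2 * c 0 2 2)) = 0" using F by algebra
  show "((c 0 1 1 * c 1 1 0 + c 0 1 2 * c 2 1 0) - (c 1 1 0 * c 0 0 0)) = 0" using F by algebra
  show "((c 0 1 1 * c 1 2 0 + c 0 1 2 * c 2 2 0) - (c 1 2 0 * c 0 0 0)) = 0" using F by algebra
  show "((c 0 2 1 * c 1 0 1 + c 0 2 2 * c 2 0 1) - (c 2 0 1 * c 0 1 1 + c 2 0 2 * c 0 2 1)) = 0" using F by algebra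
  show "((c 0 2 1 * c 1 0 2 + c 0 2 2 * c 2 0 2) - (c 2 0 1 * c 0 1 2 + c 2 0 2 * c 0 2 2)) = 0" using F by algebra
  show "((c 0 2 1 * c 1 1 0 + c 0 2 2 * c 2 1 0) - (c 2 1 0 * c 0 0 0)) = 0" using F by algebra
  show "((c 0 2 1 * c 1 2 0 + c 0 2 2 * c 2 2 0) - (c 2 2 0 * c 0 0 0)) = 0" using F by algebra
  show "((c 1 0 1 * c 1 0 1 + c 1 0 2 * c 2 0 1) - (c 0 0 0 * c 1 0 1)) = 0" using F by algebra
  show "((c 1 0 1 * c 1 0 2 + c 1 0 2 * c 2 0 2) - (c 0 0 0 * c 1 0 2)) = 0" using F by algebra
  show "((c 1 0 1 * c 1 1 0 + c 1 0 2 * c 2 1 0) - (c 0 1 1 * c 1 1 0 + c 0 1 2 * c 1 2 0)) = 0" using F by algebra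
  show "((c 1 0 1 * c 1 2 0 + c 1 0 2 * c 2 2 0) - (c 0 2 1 * c 1 1 0 + c 0 2 2 * c 1 2 0)) = 0" using F by algebra
  show "((c 1 1 0 * c 0 0 0) - (c 1 0 1 * c 1 1 0 + c 1 0 2 * c 1 2 0)) = 0" using F by algebra
  show "((c 1 1 0 * c 0 1 1) - (c 1 1 0 * c 1 0 1)) = 0" using F by algebra
  show "((c 1 1 0 * c 0 1 2) - (c 1 1 0 * c 1 0 2)) = 0" using F by algebra
  show "((c 1 1 0 * c 0 2 1) - (c 1 2 0 * c 1 0 1)) = 0" using F by algebra
  show "((c 1 1 0 * c 0 2 2) - (c 1 2 0 * c 1 0 2)) = 0" using F by algebra
  show "((c 1 2 0 * c 0 0 0) - (c 2 0 1 * c 1 1 0 + c 2 0 2 * c 1 2 0)) = 0" using F by algebra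
  show "((c 1 2 0 * c 0 1 1) - (c 2 1 0 * c 1 0 1)) = 0" using F by algebra
  show "((c 1 2 0 * c 0 1 2) - (c 2 1 0 * c 1 0 2)) = 0" using F by algebra
  show "((c 1 2 0 * c 0 2 1) - (c 2 2 0 * c 1 0 1)) = 0" using F by algebra
  show "((c 1 2 0 * c 0 2 2) - (c 2 2 0 * c 1 0 2)) = 0" using F by algebra
  show "((c 2 0 1 * c 1 0 1 + c 2 0 2 * c 2 0 1) - (c 0 0 0 * c 2 0 1)) = 0" using F by algebra
  show "((c 2 0 1 * c 1 0 2 + c 2 0 2 * c 2 0 2) - (c 0 0 0 * c 2 0 2)) = 0" using F by algebra
  show "((c 2 0 1 * c 1 1 0 + c 2 0 2 * c 2 1 0) - (c 0 1 1 * c 2 1 0 + c 0 1 2 * c 2 2 0)) = 0" using F by algebra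
  show "((c 2 0 1 * c 1 2 0 + c 2 0 2 * c 2 2 0) - (c 0 2 1 * c 2 1 0 + c 0 2 2 * c 2 2 0)) = 0" using F by algebra
  show "((c 2 1 0 * c 0 0 0) - (c 1 0 1 * c 2 1 0 + c 1 0 2 * c 2 2 0)) = 0" using F by algebra
  show "((c 2 1 0 * c 0 1 1) - (c 1 1 0 * c 2 0 1)) = 0" using F by algebra
  show "((c 2 1 0 * c 0 1 2) - (c 1 1 0 * c 2 0 2)) = 0" using F by algebra
  show "((c 2 1 0 * c 0 2 1) - (c 1 2 0 * c 2 0 1)) = 0" using F by algebra
  show "((c 2 1 0 * c 0 2 2) - (c 1 2 0 * c 2 0 2)) = 0" using F by algebra
  show "((c 2 2 0 * c 0 0 0) - (c 2 0 1 * c 2 1 0 + c 2 0 2 * c 2 2 0)) = 0" using F by algebra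
  show "((c 2 2 0 * c 0 1 1) - (c 2 1 0 * c 2 0 1)) = 0" using F by algebra
  show "((c 2 2 0 * c 0 1 2) - (c 2 1 0 * c 2 0 2)) = 0" using F by algebra
  show "((c 2 2 0 * c 0 2 1) - (c 2 2 0 * c 2 0 1)) = 0" using F by algebra
  show "((c 2 2 0 * c 0 2 2) - (c 2 2 0 * c 2 0 2)) = 0" using F by algebra
qed

lemma std_R07: "stdalg (1+\<alpha>) (1-\<alpha>) 1 0 0 0 = R07 \<alpha>"
  by (intro ext) (simp add: stdalg_def R07_def)

lemma std_R28: "stdalg 1 (-1) 1 0 0 0 = R28"
  by (intro ext) (simp add: stdalg_def R28_def)

lemma std_R01: "stdalg (1+\<alpha>) (1-\<alpha>) 0 (2*(\<alpha>-1)/(\<alpha>+1)) (-4/(\<alpha>+1)) 0 = R01 \<alpha>"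
  by (intro ext) (simp add: stdalg_def R01_def)

lemma sq3:
  fixes z :: complex
  assumes "z^2 = -3"
  shows "z = \<i> * complex_of_real (sqrt 3) \<or> z = - \<i> * complex_of_real (sqrt 3)"
proof -
  define w where "w = \<i> * complex_of_real (sqrt 3)"
  have rr: "(sqrt 3)^2 = (3::real)" by simp
  have r: "(complex_of_real (sqrt 3))^2 = 3"
  proof -
    have "complex_of_real ((sqrt 3)^2) = 3" using rr by simp
    then show ?thesis by (simp only: of_real_power)
  qed
  have w2: "w^2 = -3" using r by (simp add: w_def power_mult_distrib)
  have "(z - w) * (z + w) = z^2 - w^2"
    by (simp add: algebra_simps power2_eq_square)
  also have "\<dots> = 0" using assms w2 by simp
  finally have "z - w = 0 \<or> z + w = 0" by simp
  then have "z = w \<or> z = - w" by (auto simp: eq_neg_iff_add_eq_0)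
  then show ?thesis by (simp add: w_def)
qed

lemma nf_main:
  assumes g: "graded_sc c" and b: "binary_assoc_super c"
  and n: "c 0 0 0 = 0" "c 0 1 1 = 0" "c 0 1 2 = lam" "c 0 2 1 = 0" "c 0 2 2 = 0"
         "c 1 0 1 = 0" "c 1 0 2 = mu" "c 2 0 1 = 0" "c 2 0 2 = 0"
  shows "sc_associative c
    \<or> sc_iso c (R01 (\<i> * complex_of_real (sqrt 3)))
    \<or> sc_iso c (R01 (- \<i> * complex_of_real (sqrt 3)))
    \<or> (\<exists>\<alpha>. \<alpha> \<noteq> 0 \<and> sc_iso c (R07 \<alpha>))
    \<or> sc_iso c R28"
proof -
  note q = nf_rels[OF g b n]
  show ?thesis
  proof (cases "(lam - mu) * c 1 1 0 = 0 \<and> mu * c 1 2 0 = 0 \<and> lam * c 2 1 0 = 0")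
    case True
    then show ?thesis using nf_assoc[OF g b n] by blast
  next
    case False
    have lm: "lam \<noteq> 0 \<or> mu \<noteq> 0" using False by auto
    have B22: "c 2 2 0 = 0" using q(1,2) lm by auto
    show ?thesis
    proof (cases "c 1 2 0 = 0 \<and> c 2 1 0 = 0")
      case True
      note BZ = True
      then have nz: "lam \<noteq> mu" "c 1 1 0 \<noteq> 0" using False by auto
      show ?thesis
      proof (cases "lam + mu = 0")
        case False
        define \<alpha> where "\<alpha> = (lam - mu)/(lam + mu)"
        define t where "t = c 1 1 0 * (lam + mu) / 2"
        have t: "t \<noteq> 0" using nz False by (simp add: t_def)
        have e: "lam / t * t = lam" "mu / t * t = mu" using t by simp_all
        have nz2: "lam * c 1 1 0 + mu * c 1 1 0 \<noteq> 0"
        proof -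
          have "(lam + mu) * c 1 1 0 \<noteq> 0" using nz False by simp
          then show ?thesis by (simp add: distrib_right)
        qed
        have tL: "1 + \<alpha> = c 1 1 0 * (lam / t)" "1 - \<alpha> = c 1 1 0 * (mu / t)"
          using nz False nz2 by (simp_all add: \<alpha>_def t_def field_simps)
        have "sc_iso c (stdalg (1+\<alpha>) (1-\<alpha>) 1 0 0 0)"
          apply (rule key[OF g n(1), where xa=1 and xb=0 and ya=0 and yb=t and p="c 1 1 0" and lam="lam / t" and mu="mu / t"])
          using t nz True B22 n e tL by (simp_all add: bf_def)
        moreover have "\<alpha> \<noteq> 0" using nz False by (simp add: \<alpha>_def)
        ultimately show ?thesis using std_R07 by metis
      next
        case True
        have l0: "lam \<noteq> 0" using True nz by auto
        define t where "t = c 1 1 0 * lam"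
        have t: "t \<noteq> 0" using nz l0 by (simp add: t_def)
        have mu: "mu = - lam" using True by (simp add: eq_neg_iff_add_eq_0 add.commute)
        have e: "lam / t * t = lam" "mu / t * t = mu" using t by simp_all
        have tL: "1 = c 1 1 0 * (lam / t)" "-1 = c 1 1 0 * (mu / t)"
          using nz l0 mu by (simp_all add: t_def field_simps)
        have "sc_iso c (stdalg 1 (-1) 1 0 0 0)"
          apply (rule key[OF g n(1), where xa=1 and xb=0 and ya=0 and yb=t and p="c 1 1 0" and lam="lam / t" and mu="mu / t"])
          using t nz B22 n e tL BZ by (simp_all add: bf_def)
        then show ?thesis using std_R28 by metis
      qed
    next
      case False
      have h1: "(lam^2 + lam*mu + mu^2) * c 2 1 0 = 0" "(lam^2 + lam*mu + mu^2) * c 1 2 0 = 0"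
        using q by algebra+
      have h: "lam^2 + lam*mu + mu^2 = 0" using h1 False by auto
      have hB: "(lam + mu) * c 1 2 0 = mu * c 2 1 0" using q by algebra
      have l0: "lam \<noteq> 0" using h lm by auto
      have m0: "mu \<noteq> 0" using h lm by auto
      have lmu: "lam + mu \<noteq> 0"
      proof
        assume "lam + mu = 0"
        then have "mu = - lam" by (simp add: eq_neg_iff_add_eq_0 add.commute)
        then show False using h l0 by (simp add: power2_eq_square)
      qed
      have B21: "c 2 1 0 \<noteq> 0" using q(3) m0 False by auto
      have BB: "c 1 2 0 + c 2 1 0 \<noteq> 0"
      proof
        assume "c 1 2 0 + c 2 1 0 = 0"
        then have "c 1 2 0 = - c 2 1 0" by (simp add: eq_neg_iff_add_eq_0)
        then have "lam = mu" using q(3) B21 by (simp add: algebra_simps)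
        then show False using h l0 by (simp add: power2_eq_square)
      qed
      define \<alpha> where "\<alpha> = (lam - mu)/(lam + mu)"
      define s where "s = csqrt (-4 / (lam * c 2 1 0))"
      define t where "t = s * (lam + mu) / 2"
      define \<kappa> where "\<kappa> = - c 1 1 0 / (c 1 2 0 + c 2 1 0)"
      have s2: "s^2 = -4 / (lam * c 2 1 0)" by (simp add: s_def)
      have s0: "s \<noteq> 0" using s2 l0 B21 by auto
      have t0: "t \<noteq> 0" using s0 lmu by (simp add: t_def)
      have st: "s * t = -2 * (lam + mu) / (lam * c 2 1 0)"
      proof -
        have "s * t = s^2 * (lam + mu) / 2" by (simp add: t_def power2_eq_square)
        also have "\<dots> = -4 / (lam * c 2 1 0) * (lam + mu) / 2" by (simp only: s2)
        also have "\<dots> = -2 * (lam + mu) / (lam * c 2 1 0)" using l0 B21 by (simp add: field_simps)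
        finally show ?thesis .
      qed
      have a1: "\<alpha> + 1 = 2 * lam / (lam + mu)" "\<alpha> - 1 = -2 * mu / (lam + mu)" "1 - \<alpha> = 2 * mu / (lam + mu)"
        using lmu by (simp_all add: \<alpha>_def field_simps)
      have ap: "\<alpha> + 1 \<noteq> 0" using a1 l0 lmu by simp
      have r12: "2 * (\<alpha> - 1) / (\<alpha> + 1) = -2 * mu / lam"
      proof -
        have "(-2 * mu / lam) * (\<alpha> + 1) = 2 * (\<alpha> - 1)"
          unfolding a1 using l0 lmu by (simp add: field_simps)
        then show ?thesis using ap by (simp add: divide_eq_eq)
      qed
      have r21: "-4 / (\<alpha> + 1) = -2 * (lam + mu) / lam"
      proof -
        have dn: "lam * lam + lam * mu \<noteq> 0"
        proof -
          have "lam * (lam + mu) \<noteq> 0" using l0 lmu by simp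
          then show ?thesis by (simp add: distrib_left)
        qed
        have "(-2 * (lam + mu) / lam) * (\<alpha> + 1) = -4"
          unfolding a1 using l0 lmu dn by (simp add: field_simps)
        then show ?thesis using ap l0 by (simp add: field_simps)
      qed
      have t12: "bf c s (s * \<kappa>) 0 t = 1 * (2 * (\<alpha> - 1) / (\<alpha> + 1))"
      proof -
        have "bf c s (s * \<kappa>) 0 t = s * t * c 1 2 0" by (simp add: bf_def B22)
        also have "\<dots> = -2 * ((lam + mu) * c 1 2 0) / (lam * c 2 1 0)" using l0 B21 by (simp add: st field_simps)
        also have "\<dots> = -2 * mu / lam" using B21 l0 by (simp add: hB)
        finally show ?thesis using r12 by simp
      qed
      have t21: "bf c 0 t s (s * \<kappa>) = 1 * (-4 / (\<alpha> + 1))"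
      proof -
        have "bf c 0 t s (s * \<kappa>) = s * t * c 2 1 0" by (simp add: bf_def B22 algebra_simps)
        also have "\<dots> = -2 * (lam + mu) / lam" using B21 l0 by (simp add: st field_simps)
        finally show ?thesis using r21 by simp
      qed
      have t11: "bf c s (s * \<kappa>) s (s * \<kappa>) = 1 * 0"
      proof -
        have "bf c s (s * \<kappa>) s (s * \<kappa>) = s^2 * (c 1 1 0 + \<kappa> * (c 1 2 0 + c 2 1 0))"
          by (simp add: bf_def B22 algebra_simps power2_eq_square)
        also have "\<dots> = 0" using BB by (simp add: \<kappa>_def)
        finally show ?thesis by simp
      qed
      have t22: "bf c 0 t 0 t = 1 * 0" by (simp add: bf_def B22)
      have e: "s * lam / t * t = lam * s" "s * mu / t * t = mu * s" using t0 by simp_all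
      have q1: "s * lam / t = 2 * lam / (lam + mu)" "s * mu / t = 2 * mu / (lam + mu)"
        using s0 lmu by (simp_all add: t_def)
      have tL: "1 + \<alpha> = 1 * (s * lam / t)" "1 - \<alpha> = 1 * (s * mu / t)"
        using a1 q1 by (simp_all add: add.commute)
      have "sc_iso c (stdalg (1+\<alpha>) (1-\<alpha>) 0 (2*(\<alpha>-1)/(\<alpha>+1)) (-4/(\<alpha>+1)) 0)"
        apply (rule key[OF g n(1), where xa=s and xb="s * \<kappa>" and ya=0 and yb=t and p=1 and lam="s * lam / t" and mu="s * mu / t"])
        using s0 t0 n t11 t12 t21 t22 e tL by (simp_all add: mult.commute)
      then have iso: "sc_iso c (R01 \<alpha>)" using std_R01 by metis
      have "\<alpha>^2 = -3"
      proof -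
        have A: "\<alpha> * (lam + mu) = lam - mu" using lmu by (simp add: \<alpha>_def)
        have "(\<alpha>^2 + 3) * (lam + mu)^2 = (\<alpha> * (lam + mu))^2 + 3 * (lam + mu)^2"
          by (simp add: power2_eq_square algebra_simps)
        also have "\<dots> = (lam - mu)^2 + 3 * (lam + mu)^2" by (simp only: A)
        also have "\<dots> = 4 * (lam^2 + lam*mu + mu^2)" by (simp add: power2_eq_square algebra_simps)
        also have "\<dots> = 0" using h by simp
        finally have "(\<alpha>^2 + 3) * (lam + mu)^2 = 0" .
        then have "\<alpha>^2 + 3 = 0" using lmu by simp
        then show ?thesis by (simp add: eq_neg_iff_add_eq_0)
      qed
      then show ?thesis using sq3 iso by blast
    qed
  qed
qed

lemma reduce:
  fixes c :: sc3 and xa xb ya yb lam mu :: complex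
  assumes g: "graded_sc c" and b: "binary_assoc_super c" and a0: "c 0 0 0 = 0"
  and d: "xa*yb - xb*ya \<noteq> 0"
  and l1: "c 0 1 1 * xa + c 0 2 1 * xb = lam * ya" "c 0 1 2 * xa + c 0 2 2 * xb = lam * yb"
  and r1: "c 1 0 1 * xa + c 2 0 1 * xb = mu * ya" "c 1 0 2 * xa + c 2 0 2 * xb = mu * yb"
  and l2: "c 0 1 1 * ya + c 0 2 1 * yb = 0" "c 0 1 2 * ya + c 0 2 2 * yb = 0"
  and r2: "c 1 0 1 * ya + c 2 0 1 * yb = 0" "c 1 0 2 * ya + c 2 0 2 * yb = 0"
  shows "sc_associative c
    \<or> sc_iso c (R01 (\<i> * complex_of_real (sqrt 3)))
    \<or> sc_iso c (R01 (- \<i> * complex_of_real (sqrt 3)))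
    \<or> (\<exists>\<alpha>. \<alpha> \<noteq> 0 \<and> sc_iso c (R07 \<alpha>))
    \<or> sc_iso c R28"
proof -
  define dd where "dd = xa*yb - xb*ya"
  have dd: "dd \<noteq> 0" using d dd_def by simp
  have sq: "xa * (xa * (yb * yb)) + xb * (xb * (ya * ya)) \<noteq> xa * (xb * (ya * (yb * 2)))"
  proof
    assume "xa * (xa * (yb * yb)) + xb * (xb * (ya * ya)) = xa * (xb * (ya * (yb * 2)))"
    then have "(xa*yb - xb*ya)^2 = 0" by (simp add: power2_eq_square algebra_simps)
    then show False using d by simp
  qed
  define P where "P = mat3 1 0 0 0 xa ya 0 xb yb"
  define e where "e = inverse dd"
  have de: "(xa*yb - xb*ya) * e = 1" using dd unfolding e_def dd_def by simp
  define M where "M = mat3 1 0 0 0 (yb*e) (-ya*e) 0 (-xb*e) (xa*e)"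
  have MP: "M ** P = mat 1" unfolding M_def P_def
    by (simp add: vec_eq_iff forall3 matrix_matrix_mult_def sum3 mat_def) (use de in algebra)
  have PM: "P ** M = mat 1" unfolding M_def P_def
    by (simp add: vec_eq_iff forall3 matrix_matrix_mult_def sum3 mat_def) (use de in algebra)
  have bM: "blk M" and bP: "blk P" unfolding M_def P_def blk_def by simp_all
  define c' where "c' = transp c P M"
  have iso: "isodata c c' M P" unfolding c'_def using isodata_transp[OF MP PM bM bP] .
  have g': "graded_sc c'" unfolding c'_def using transp_graded[OF g bM bP] .
  have b': "binary_assoc_super c'" using isodata_binary[OF iso b] .
  note T = transp_def matrix_vector_mult_def smult_comp column_def sum3 gz[OF g] M_def P_def
  have n: "c' 0 0 0 = 0" "c' 0 1 1 = 0" "c' 0 1 2 = lam" "c' 0 2 1 = 0" "c' 0 2 2 = 0"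
         "c' 1 0 1 = 0" "c' 1 0 2 = mu" "c' 2 0 1 = 0" "c' 2 0 2 = 0"
    unfolding c'_def
    by (simp_all add: T) (use a0 l1 r1 l2 r2 de in algebra)+
  have "sc_associative c'
    \<or> sc_iso c' (R01 (\<i> * complex_of_real (sqrt 3)))
    \<or> sc_iso c' (R01 (- \<i> * complex_of_real (sqrt 3)))
    \<or> (\<exists>\<alpha>. \<alpha> \<noteq> 0 \<and> sc_iso c' (R07 \<alpha>))
    \<or> sc_iso c' R28"
    using nf_main[OF g' b' n] .
  moreover have "sc_iso c c'" using isodata_iso[OF iso] .
  ultimately show ?thesis using isodata_assoc[OF iso] iso_trans by blast
qed

theorem mainTheorem19:
  fixes c :: sc3
  assumes "graded_sc c" and "binary_assoc_super c"
  shows "sc_associative c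
    \<or> sc_iso c (R01 (\<i> * complex_of_real (sqrt 3)))
    \<or> sc_iso c (R01 (- \<i> * complex_of_real (sqrt 3)))
    \<or> (\<exists>\<alpha>. \<alpha> \<noteq> 0 \<and> sc_iso c (R07 \<alpha>))
    \<or> sc_iso c R28"
proof (cases "c 0 0 0 = 0")
  case False
  then show ?thesis using assoc_nz[OF assms] by blast
next
  case True
  note g = assms(1) and b = assms(2) and a0 = True
  note E = Ered[OF g b] a0
  show ?thesis
  proof (cases "c 0 1 1 \<noteq> 0")
    case True
    define mu where "mu = c 1 0 1 / c 0 1 1"
    have hm: "mu * c 0 1 1 = c 1 0 1" using True by (simp add: mu_def)
    show ?thesis
      apply (rule reduce[OF g b a0, where xa=1 and xb=0 and ya="c 0 1 1" and yb="c 0 1 2" and lam=1 and mu=mu])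
      using E hm True by algebra+
  next
    case F1: False
    show ?thesis
    proof (cases "c 0 1 2 \<noteq> 0")
      case True
      define mu where "mu = c 1 0 2 / c 0 1 2"
      have hm: "mu * c 0 1 2 = c 1 0 2" using True by (simp add: mu_def)
      show ?thesis
        apply (rule reduce[OF g b a0, where xa=1 and xb=0 and ya="c 0 1 1" and yb="c 0 1 2" and lam=1 and mu=mu])
        using E hm True F1 by algebra+
    next
      case F2: False
      show ?thesis
      proof (cases "c 0 2 1 \<noteq> 0")
        case True
        define mu where "mu = c 2 0 1 / c 0 2 1"
        have hm: "mu * c 0 2 1 = c 2 0 1" using True by (simp add: mu_def)
        show ?thesis
          apply (rule reduce[OF g b a0, where xa=0 and xb=1 and ya="c 0 2 1" and yb="c 0 2 2" and lam=1 and mu=mu])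
          using E hm True F1 F2 by algebra+
      next
        case F3: False
        have F4: "c 0 2 2 = 0" using E F1 F2 F3 by algebra
        show ?thesis
        proof (cases "c 1 0 1 \<noteq> 0 \<or> c 1 0 2 \<noteq> 0")
          case True
          show ?thesis
            apply (rule reduce[OF g b a0, where xa=1 and xb=0 and ya="c 1 0 1" and yb="c 1 0 2" and lam=0 and mu=1])
            using E True F1 F2 F3 F4 by algebra+
        next
          case F5: False
          show ?thesis
          proof (cases "c 2 0 1 \<noteq> 0")
            case True
            show ?thesis
              apply (rule reduce[OF g b a0, where xa=0 and xb=1 and ya="c 2 0 1" and yb="c 2 0 2" and lam=0 and mu=1])
              using E True F1 F2 F3 F4 F5 by algebra+
          next
            case F6: False
            have F7: "c 2 0 2 = 0" using E F5 F6 by algebra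
            have "sc_associative c"
              apply (rule nf_assoc[OF g b, where lam=0 and mu=0])
              using a0 F1 F2 F3 F4 F5 F6 F7 by simp_all
            then show ?thesis by blast
          qed
        qed
      qed
    qed
  qed
qed

end
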